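(* There exists $n_0\in\mathbb N$ such that for every $n>n_0$ the following holds. Let $r,m$ be positive integers dividing $n$ with $r>1$ and $n/m$ even. Then $(r^{n/r})^2\supseteq(m^{n/m})$.
   Context: For $k$ dividing $n$, $(k^{n/k})$ denotes the conjugacy class of $S_n$ consisting of the permutations that are products of $n/k$ disjoint $k$-cycles. For $B\subseteq S_n$, $B^2=\{xy:x,y\in B\}$. *)

theory Defs
  imports "HOL-Combinatorics.Permutations"
begin

text \<open>Permutations of S_n are modelled as functions p with p permutes {0..<n}.
  cycle_class n k is the class (k^(n/k)): permutations all of whose cycles have
  length exactly k, i.e. every point x has least period k under p.\<close>

definition cycle_class :: "nat \<Rightarrow> nat \<Rightarrow> (nat \<Rightarrow> nat) set" where
  "cycle_class n k = {p. p permutes {0..<n} \<and>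
     (\<forall>x<n. (p ^^ k) x = x \<and> (\<forall>j. 0 < j \<and> j < k \<longrightarrow> (p ^^ j) x \<noteq> x))}"

definition set_square :: "(nat \<Rightarrow> nat) set \<Rightarrow> (nat \<Rightarrow> nat) set" where
  "set_square B = {x \<circ> y | x y. x \<in> B \<and> y \<in> B}"

end

theory Submission
  imports Defs
begin


definition reg :: "nat \<Rightarrow> ('a \<Rightarrow> 'a) \<Rightarrow> 'a set \<Rightarrow> bool" where
  "reg k p S \<longleftrightarrow> p permutes S \<and> (\<forall>x\<in>S. (p ^^ k) x = x \<and> (\<forall>j. 0 < j \<and> j < k \<longrightarrow> (p ^^ j) x \<noteq> x))"

lemma reg_perm: "reg k p S \<Longrightarrow> p permutes S"
  unfolding reg_def by simp

lemma reg_fix: "reg k p S \<Longrightarrow> x \<in> S \<Longrightarrow> (p ^^ k) x = x"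
  unfolding reg_def by simp

lemma reg_nofix: "reg k p S \<Longrightarrow> x \<in> S \<Longrightarrow> 0 < j \<Longrightarrow> j < k \<Longrightarrow> (p ^^ j) x \<noteq> x"
  unfolding reg_def by simp

lemma perm_funpow: "p permutes S \<Longrightarrow> (p ^^ n) permutes S"
proof (induct n)
  case 0 then show ?case using permutes_id[of S] by (simp add: id_def)
next
  case (Suc n)
  then show ?case by (simp only: funpow_Suc_right permutes_compose)
qed

lemma funpow_in: "p permutes S \<Longrightarrow> x \<in> S \<Longrightarrow> (p ^^ n) x \<in> S"
  by (simp add: perm_funpow permutes_in_image)

lemma reg_mod:
  assumes "reg k p S" "x \<in> S"
  shows "(p ^^ N) x = (p ^^ (N mod k)) x"
proof -
  have fix_k: "(p ^^ (k * q)) x = x" for q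
  proof (induct q)
    case (Suc q)
    have "(p ^^ (k * Suc q)) x = (p ^^ k) ((p ^^ (k*q)) x)"
      by (simp add: funpow_add)
    then show ?case using Suc assms unfolding reg_def by simp
  qed simp
  have "N = N mod k + k * (N div k)" by simp
  then have "(p ^^ N) x = (p ^^ (N mod k)) ((p ^^ (k * (N div k))) x)"
    by (metis comp_apply funpow_add)
  with fix_k show ?thesis by simp
qed

lemma reg_dvd:
  assumes "reg k p S" "x \<in> S" "0 < k"
  shows "(p ^^ N) x = x \<longleftrightarrow> k dvd N"
proof -
  have "(p ^^ N) x = (p ^^ (N mod k)) x" by (rule reg_mod[OF assms(1,2)])
  moreover have "N mod k < k" using assms(3) by simp
  moreover have "(p ^^ (N mod k)) x = x \<longleftrightarrow> N mod k = 0"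
  proof
    assume h: "(p ^^ (N mod k)) x = x"
    show "N mod k = 0"
    proof (rule ccontr)
      assume "N mod k \<noteq> 0"
      then have "0 < N mod k" by simp
      then show False using h \<open>N mod k < k\<close> assms(1,2) unfolding reg_def by blast
    qed
  qed simp
  ultimately show ?thesis by (simp add: dvd_eq_mod_eq_0)
qed


lemma reg_pow:
  assumes "reg k p S" "coprime u k" "0 < k"
  shows "reg k (p ^^ u) S"
  unfolding reg_def
proof (intro conjI ballI allI impI)
  show "(p ^^ u) permutes S" using assms(1) perm_funpow reg_def by blast
  fix x assume x: "x \<in> S"
  have e: "((p ^^ u) ^^ j) x = x \<longleftrightarrow> k dvd j" for j
    using reg_dvd[OF assms(1) x assms(3), of "u*j"] assms(2)
    by (simp add: funpow_mult coprime_dvd_mult_left_iff coprime_commute mult.commute)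
  show "((p ^^ u) ^^ k) x = x" using e by simp
  fix j assume "0 < j \<and> j < k"
  then show "((p ^^ u) ^^ j) x \<noteq> x" using e by (simp add: nat_dvd_not_less)
qed

lemma perm_of_pow:
  assumes "\<And>x. x \<in> A \<Longrightarrow> f x \<in> A" "\<And>x. x \<notin> A \<Longrightarrow> f x = x"
    "\<And>x. x \<in> A \<Longrightarrow> (f ^^ N) x = x" "0 < N"
  shows "f permutes A"
proof -
  have inA: "x \<in> A \<Longrightarrow> (f ^^ n) x \<in> A" for x n by (induct n) (auto simp: assms(1))
  have inv: "x \<in> A \<Longrightarrow> (f ^^ (N - 1)) (f x) = x" for x
  proof -
    assume x: "x \<in> A"
    have "N = Suc (N - 1)" using assms(4) by simp
    then have "(f ^^ N) x = (f ^^ (N - 1)) (f x)" by (metis comp_apply funpow_Suc_right)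
    then show ?thesis using assms(3)[OF x] by simp
  qed
  have inj: "inj_on f A" proof (rule inj_onI)
    fix x y assume "x \<in> A" "y \<in> A" "f x = f y"
    then show "x = y" using inv by metis
  qed
  have sur: "f ` A = A"
  proof
    show "f ` A \<subseteq> A" using assms(1) by auto
    show "A \<subseteq> f ` A"
    proof
      fix y assume y: "y \<in> A"
      have "N = Suc (N - 1)" using assms(4) by simp
      then have "f ((f ^^ (N - 1)) y) = (f ^^ N) y" by (metis comp_apply funpow.simps(2))
      then have "f ((f ^^ (N - 1)) y) = y" using assms(3)[OF y] by simp
      then show "y \<in> f ` A" using inA[OF y] by (metis imageI)
    qed
  qed
  show ?thesis by (rule bij_imp_permutes) (auto simp: bij_betw_def inj sur assms(2))
qed

definition skew :: "nat \<Rightarrow> nat \<Rightarrow> (nat \<Rightarrow> 'b \<Rightarrow> 'b) \<Rightarrow> 'b set \<Rightarrow> nat \<times> 'b \<Rightarrow> nat \<times> 'b" where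
  "skew r t \<psi> B = (\<lambda>(i,b). if i < r \<and> b \<in> B then ((i + t) mod r, \<psi> i b) else (i,b))"

fun hol :: "nat \<Rightarrow> nat \<Rightarrow> (nat \<Rightarrow> 'b \<Rightarrow> 'b) \<Rightarrow> nat \<Rightarrow> nat \<Rightarrow> 'b \<Rightarrow> 'b" where
  "hol r t \<psi> 0 i = id"
| "hol r t \<psi> (Suc j) i = \<psi> ((i + j*t) mod r) \<circ> hol r t \<psi> j i"

lemma hol_perm: "(\<And>i. \<psi> i permutes B) \<Longrightarrow> hol r t \<psi> j i permutes B"
  by (induct j) (simp_all add: permutes_compose)

lemma hol_add: "hol r t \<psi> (a + b) i = hol r t \<psi> b ((i + a*t) mod r) \<circ> hol r t \<psi> a i"
proof (induct b)
  case 0 then show ?case by simp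
next
  case (Suc b)
  have "((i + a*t) mod r + b*t) mod r = (i + a*t + b*t) mod r" by (rule mod_add_left_eq)
  then have e: "((i + a*t) mod r + b*t) mod r = (i + (a+b)*t) mod r"
    by (simp add: algebra_simps)
  show ?case using Suc by (simp add: e o_assoc)
qed

lemma skew_apply: "i < r \<Longrightarrow> b \<in> B \<Longrightarrow> skew r t \<psi> B (i,b) = ((i+t) mod r, \<psi> i b)"
  by (simp add: skew_def)

lemma skew_out: "\<not> (i < r \<and> b \<in> B) \<Longrightarrow> skew r t \<psi> B (i,b) = (i,b)"
  unfolding skew_def by auto

lemma skew_pow:
  assumes "i < r" "b \<in> B" "\<And>i. \<psi> i permutes B"
  shows "(skew r t \<psi> B ^^ j) (i,b) = ((i + j*t) mod r, hol r t \<psi> j i b)"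
proof (induct j)
  case 0 then show ?case using assms(1) by simp
next
  case (Suc j)
  have r0: "0 < r" using assms(1) by simp
  have hp: "hol r t \<psi> j i permutes B" by (rule hol_perm) (rule assms(3))
  have inB: "hol r t \<psi> j i b \<in> B" using permutes_in_image[OF hp] assms(2) by simp
  have e0: "i + Suc j * t = i + j*t + t" by simp
  have e: "((i + j*t) mod r + t) mod r = (i + Suc j * t) mod r"
    unfolding e0 by (rule mod_add_left_eq)
  have "(skew r t \<psi> B ^^ Suc j) (i,b) = skew r t \<psi> B ((skew r t \<psi> B ^^ j) (i,b))"
    by (simp only: funpow.simps comp_apply)
  also have "\<dots> = skew r t \<psi> B ((i + j*t) mod r, hol r t \<psi> j i b)"
    by (simp only: Suc)
  also have "\<dots> = (((i + j*t) mod r + t) mod r, \<psi> ((i + j*t) mod r) (hol r t \<psi> j i b))"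
    by (rule skew_apply) (use r0 inB in auto)
  finally show ?case unfolding e by simp
qed

lemma hol_period:
  assumes "i < r" "(k*t) mod r = 0"
  shows "hol r t \<psi> (k*q) i = hol r t \<psi> k i ^^ q"
proof (induct q)
  case 0 then show ?case by simp
next
  case (Suc q)
  have e: "(i + (k*q)*t) mod r = i"
  proof -
    have "(k*q*t) mod r = ((k*t)*q) mod r" by (simp add: mult.commute mult.left_commute)
    also have "\<dots> = ((k*t) mod r * q) mod r" by (rule mod_mult_left_eq[symmetric])
    finally have "(k*q*t) mod r = ((k*t) mod r * q) mod r" .
    then have "(k*q*t) mod r = 0" using assms(2) by simp
    then show ?thesis using assms(1) by (simp add: mod_add_right_eq[symmetric])
  qed
  have "hol r t \<psi> (k * Suc q) i = hol r t \<psi> k ((i + (k*q)*t) mod r) \<circ> hol r t \<psi> (k*q) i"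
    using hol_add[of r t \<psi> "k*q" k i] by (simp add: add.commute)
  then show ?case using Suc e by simp
qed

lemma hol_conj:
  assumes "i < r" "(k*t) mod r = 0"
  shows "hol r t \<psi> k ((i+t) mod r) \<circ> \<psi> i = \<psi> i \<circ> hol r t \<psi> k i"
proof -
  have "hol r t \<psi> (1 + k) i = hol r t \<psi> k ((i + t) mod r) \<circ> \<psi> i"
    using hol_add[of r t \<psi> 1 k i] assms(1) by simp
  moreover have "hol r t \<psi> (Suc k) i = \<psi> i \<circ> hol r t \<psi> k i"
  proof -
    have "(i + k*t) mod r = i" using assms by (simp add: mod_add_right_eq[symmetric])
    then show ?thesis by simp
  qed
  ultimately show ?thesis by simp
qed

lemma reg_transfer:
  assumes "reg l H B" "\<phi> permutes B" "H' permutes B" "\<And>b. b \<in> B \<Longrightarrow> H' (\<phi> b) = \<phi> (H b)"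
  shows "reg l H' B"
  unfolding reg_def
proof (intro conjI ballI allI impI)
  show "H' permutes B" by fact
  have pw: "b \<in> B \<Longrightarrow> (H' ^^ j) (\<phi> b) = \<phi> ((H ^^ j) b)" for b j
  proof (induct j)
    case (Suc j)
    have "H permutes B" using assms(1) unfolding reg_def by simp
    then have "(H ^^ j) b \<in> B" using Suc(2) by (rule funpow_in)
    then show ?case using Suc assms(4) by simp
  qed simp
  fix y assume y: "y \<in> B"
  have "y \<in> \<phi> ` B" using y permutes_image[OF assms(2)] by simp
  then obtain b where b: "b \<in> B" "y = \<phi> b" by blast
  have inj: "\<phi> u = \<phi> v \<longleftrightarrow> u = v" for u v using permutes_inj[OF assms(2)] by (auto dest: injD)
  show "(H' ^^ l) y = y" using b pw[OF b(1)] assms(1) inj unfolding reg_def by simp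
  fix j assume "0 < j \<and> j < l"
  then show "(H' ^^ j) y \<noteq> y" using b pw[OF b(1), of j] assms(1) inj unfolding reg_def by simp
qed

lemma mod_add_cancel_aux:
  fixes i r x :: nat
  assumes "i < r" "(i + x) mod r = i"
  shows "x mod r = 0"
proof -
  have r0: "0 < r" using assms(1) by simp
  have "(i + x mod r) mod r = i" using assms(2) by (simp add: mod_add_right_eq)
  moreover have "x mod r < r" using r0 by simp
  moreover note assms(1)
  ultimately show ?thesis
  proof (cases "i + x mod r < r")
    case True
    then show ?thesis using \<open>(i + x mod r) mod r = i\<close> by simp
  next
    case False
    then have "r \<le> i + x mod r" by simp
    then have "(i + x mod r) mod r = (i + x mod r - r) mod r" by (rule le_mod_geq)
    moreover have "i + x mod r - r < r" using \<open>x mod r < r\<close> assms(1) by linarith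
    ultimately have "i + x mod r - r = i" using \<open>(i + x mod r) mod r = i\<close> by simp
    then show ?thesis using False \<open>x mod r < r\<close> by linarith
  qed
qed

lemma mod_add_inj:
  fixes i i' r t :: nat
  assumes "i < r" "i' < r" "(i + t) mod r = (i' + t) mod r"
  shows "i = i'"
proof -
  have r0: "0 < r" using assms(1) by simp
  have key: "((j + t) mod r + (r - t mod r)) mod r = j" if "j < r" for j
  proof -
    have "((j + t) mod r + (r - t mod r)) mod r = (j + t + (r - t mod r)) mod r"
      by (rule mod_add_left_eq)
    also have "j + t + (r - t mod r) = j + r * (t div r + 1)"
    proof -
      have tm: "t mod r + (r - t mod r) = r" using r0 by simp
      have "j + t + (r - t mod r) = j + (r*(t div r) + t mod r) + (r - t mod r)" by simp
      also have "\<dots> = j + r*(t div r) + (t mod r + (r - t mod r))" by (simp only: add.assoc)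
      also have "\<dots> = j + r*(t div r + 1)" using tm by simp
      finally show ?thesis .
    qed
    also have "(j + r * (t div r + 1)) mod r = j mod r" by (rule mod_mult_self2)
    also have "\<dots> = j" using that by simp
    finally show ?thesis .
  qed
  have "i = ((i + t) mod r + (r - t mod r)) mod r" using key[OF assms(1)] by simp
  also have "\<dots> = ((i' + t) mod r + (r - t mod r)) mod r" by (simp only: assms(3))
  also have "\<dots> = i'" by (rule key[OF assms(2)])
  finally show ?thesis .
qed

lemma skew_perm:
  assumes "finite B" "\<And>i. \<psi> i permutes B"
  shows "skew r t \<psi> B permutes ({0..<r} \<times> B)"
proof (rule bij_imp_permutes)
  let ?A = "{0..<r} \<times> B"
  let ?f = "skew r t \<psi> B"
  have into: "?f x \<in> ?A" if "x \<in> ?A" for x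
  proof -
    obtain i b where x0: "x = (i,b)" by (cases x)
    then have x: "x = (i,b)" "i < r" "b \<in> B" using that by auto
    then have "?f x = ((i + t) mod r, \<psi> i b)" by (simp add: skew_apply)
    moreover have "\<psi> i b \<in> B" using permutes_in_image[OF assms(2)] x(3) by simp
    ultimately show ?thesis using x(2) by simp
  qed
  have inj: "inj_on ?f ?A"
  proof (rule inj_onI)
    fix x y assume xy: "x \<in> ?A" "y \<in> ?A" "?f x = ?f y"
    obtain i b where x: "x = (i,b)" "i < r" "b \<in> B" using xy(1) by auto
    obtain i' b' where y: "y = (i',b')" "i' < r" "b' \<in> B" using xy(2) by auto
    have "((i + t) mod r, \<psi> i b) = ((i' + t) mod r, \<psi> i' b')"
      using xy(3) x y by (simp add: skew_apply)
    then have "(i + t) mod r = (i' + t) mod r" "\<psi> i b = \<psi> i' b'" by auto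
    then have "i = i'" using mod_add_inj x(2) y(2) by blast
    with \<open>\<psi> i b = \<psi> i' b'\<close> have "b = b'" using permutes_inj[OF assms(2)] by (auto dest: injD)
    then show "x = y" using x y \<open>i = i'\<close> by simp
  qed
  have sub: "?f ` ?A \<subseteq> ?A" using into by blast
  have fin: "finite ?A" using assms(1) by simp
  have "?f ` ?A = ?A" by (rule endo_inj_surj[OF fin sub inj])
  then show "bij_betw ?f ?A ?A" using inj by (simp add: bij_betw_def)
  show "\<And>x. x \<notin> ?A \<Longrightarrow> ?f x = x"
  proof -
    fix x assume "x \<notin> ?A"
    then show "?f x = x" by (cases x) (simp add: skew_out)
  qed
qed

lemma skew_reg:
  assumes B: "finite B" and r: "0 < r" and perm: "\<And>i. \<psi> i permutes B" and k: "0 < k"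
    and kt: "\<And>j. (j*t) mod r = 0 \<longleftrightarrow> k dvd j" and l: "0 < l"
    and H: "\<And>i. i < r \<Longrightarrow> reg l (hol r t \<psi> k i) B"
  shows "reg (k*l) (skew r t \<psi> B) ({0..<r} \<times> B)"
  unfolding reg_def
proof (intro conjI ballI allI impI)
  show "skew r t \<psi> B permutes {0..<r} \<times> B" by (rule skew_perm[OF B perm])
  fix x assume "x \<in> {0..<r} \<times> B"
  moreover obtain i b where "x = (i,b)" by (cases x)
  ultimately have x: "x = (i,b)" "i < r" "b \<in> B" by auto
  have k0: "(k*t) mod r = 0" using kt[of k] by simp
  have pw: "(skew r t \<psi> B ^^ (k*q)) x = (i, (hol r t \<psi> k i ^^ q) b)" for q
  proof -
    have "(skew r t \<psi> B ^^ (k*q)) x = ((i + (k*q)*t) mod r, hol r t \<psi> (k*q) i b)"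
      using skew_pow[OF x(2,3) perm] x(1) by simp
    moreover have "(i + (k*q)*t) mod r = i"
    proof -
      have "(k*q*t) mod r = ((k*t)*q) mod r" by (simp add: mult.commute mult.left_commute)
      also have "\<dots> = ((k*t) mod r * q) mod r" by (rule mod_mult_left_eq[symmetric])
      finally have "(k*q*t) mod r = 0" using k0 by simp
      then show ?thesis using x(2) by (simp add: mod_add_right_eq[symmetric])
    qed
    moreover have "hol r t \<psi> (k*q) i = hol r t \<psi> k i ^^ q" by (rule hol_period[OF x(2) k0])
    ultimately show ?thesis by simp
  qed
  have Hr: "reg l (hol r t \<psi> k i) B" by (rule H[OF x(2)])
  show "(skew r t \<psi> B ^^ (k*l)) x = x" using pw[of l] reg_fix[OF Hr x(3)] x(1) by simp
  fix j assume j: "0 < j \<and> j < k*l"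
  show "(skew r t \<psi> B ^^ j) x \<noteq> x"
  proof
    assume fx: "(skew r t \<psi> B ^^ j) x = x"
    have "(skew r t \<psi> B ^^ j) x = ((i + j*t) mod r, hol r t \<psi> j i b)"
      using skew_pow[OF x(2,3) perm] x(1) by simp
    then have "(i + j*t) mod r = i" using fx x(1) by simp
    then have "(j*t) mod r = 0" by (rule mod_add_cancel_aux[OF x(2)])
    then have "k dvd j" using kt by simp
    then obtain q where q: "j = k*q" by (auto elim: dvdE)
    have "0 < q" using q j by (cases q) auto
    moreover have "q < l" using q j k by simp
    moreover have "(hol r t \<psi> k i ^^ q) b = b" using fx pw[of q] q x(1) by simp
    ultimately show False using reg_nofix[OF Hr x(3)] by simp
  qed
qed

lemma hol_walk:
  assumes perm: "\<And>i. \<psi> i permutes B" and i0: "i0 < r"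
    and kt0: "(k*t) mod r = 0" and base: "reg l (hol r t \<psi> k i0) B"
  shows "reg l (hol r t \<psi> k ((i0 + j*t) mod r)) B"
proof (induct j)
  case 0 then show ?case using base i0 by simp
next
  case (Suc j)
  let ?i = "(i0 + j*t) mod r"
  have ir: "?i < r" using i0 by simp
  have e: "(?i + t) mod r = (i0 + Suc j * t) mod r"
  proof -
    have "(?i + t) mod r = (i0 + j*t + t) mod r" by (rule mod_add_left_eq)
    also have "i0 + j*t + t = i0 + Suc j * t" by simp
    finally show ?thesis .
  qed
  have c: "hol r t \<psi> k ((?i+t) mod r) \<circ> \<psi> ?i = \<psi> ?i \<circ> hol r t \<psi> k ?i"
    by (rule hol_conj[OF ir kt0])
  have "reg l (hol r t \<psi> k ((?i+t) mod r)) B"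
  proof (rule reg_transfer[OF Suc perm])
    show "hol r t \<psi> k ((?i + t) mod r) permutes B" by (rule hol_perm) (rule perm)
    fix b assume "b \<in> B"
    show "hol r t \<psi> k ((?i + t) mod r) (\<psi> ?i b) = \<psi> ?i (hol r t \<psi> k ?i b)"
      using fun_cong[OF c, of b] by simp
  qed
  then show ?case by (simp only: e)
qed

lemma reg_std:
  assumes p: "reg k p S" and fin: "finite S" and k: "0 < k"
  shows "\<exists>g. bij_betw g ({0..<k} \<times> {0..<card S div k}) S \<and>
           (\<forall>i<k. \<forall>j<card S div k. p (g (i,j)) = g ((i+1) mod k, j))"
proof -
  have pp: "p permutes S" by (rule reg_perm[OF p])
  define orb where "orb x = (\<lambda>i. (p^^i) x) ` {0..<k}" for x
  define rep where "rep x = (SOME y. y \<in> orb x)" for x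
  have x_orb: "x \<in> orb x" for x using k unfolding orb_def by force
  have rep_orb: "rep x \<in> orb x" for x unfolding rep_def using x_orb by (rule someI)
  have orb_eq: "orb y = orb x" if x: "x \<in> S" and y: "y \<in> orb x" for x y
  proof -
    obtain i where i: "i < k" "y = (p^^i) x" using y unfolding orb_def by auto
    show ?thesis
    proof
      show "orb y \<subseteq> orb x"
      proof
        fix z assume "z \<in> orb y"
        then obtain j where j: "z = (p^^j) y" unfolding orb_def by auto
        have "z = (p^^(j+i)) x" using j i by (simp add: funpow_add)
        also have "\<dots> = (p^^((j+i) mod k)) x" by (rule reg_mod[OF p x])
        finally show "z \<in> orb x" unfolding orb_def using k by auto
      qed
      show "orb x \<subseteq> orb y"
      proof
        fix z assume "z \<in> orb x"
        then obtain j where j: "j < k" "z = (p^^j) x" unfolding orb_def by auto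
        have "(p^^((j + k - i) mod k)) y = (p^^((j + k - i) mod k + i)) x"
          using i by (simp add: funpow_add)
        also have "\<dots> = (p^^(((j + k - i) mod k + i) mod k)) x" by (rule reg_mod[OF p x])
        also have "((j + k - i) mod k + i) mod k = (j + k - i + i) mod k" by (rule mod_add_left_eq)
        also have "j + k - i + i = j + k" using i by simp
        also have "(j + k) mod k = j" using j by simp
        finally have "(p^^((j + k - i) mod k)) y = z" using j by simp
        then show "z \<in> orb y" unfolding orb_def using k by force
      qed
    qed
  qed
  define R where "R = rep ` S"
  have RS: "R \<subseteq> S"
  proof
    fix y assume "y \<in> R"
    then have "y \<in> rep ` S" by (simp add: R_def)
    then obtain x where x: "x \<in> S" "y = rep x" by blast
    then obtain i where "y = (p^^i) x" using rep_orb[of x] unfolding orb_def by auto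
    then show "y \<in> S" using funpow_in[OF pp x(1)] by simp
  qed
  have rep_R: "rep y = y" if "y \<in> R" for y
  proof -
    have "y \<in> rep ` S" using that by (simp add: R_def)
    then obtain x where x: "x \<in> S" "y = rep x" by blast
    have "orb y = orb x" using orb_eq[OF x(1)] rep_orb x(2) by simp
    then show ?thesis using x(2) unfolding rep_def by simp
  qed
  define h where "h = (\<lambda>(i,y). (p^^i) y)"
  have h_inj: "inj_on h ({0..<k} \<times> R)"
  proof (rule inj_onI)
    fix a b assume a: "a \<in> {0..<k} \<times> R" and b: "b \<in> {0..<k} \<times> R" and hab: "h a = h b"
    obtain i y where ai: "a = (i,y)" "i < k" "y \<in> R" using a by auto
    obtain i' y' where bi: "b = (i',y')" "i' < k" "y' \<in> R" using b by auto
    have yS: "y \<in> S" "y' \<in> S" using ai bi RS by auto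
    have z: "(p^^i) y = (p^^i') y'" using hab ai bi unfolding h_def by simp
    have "(p^^i) y \<in> orb y" unfolding orb_def using ai by auto
    then have o1: "orb ((p^^i) y) = orb y" using orb_eq yS by blast
    have "(p^^i') y' \<in> orb y'" unfolding orb_def using bi by auto
    then have o2: "orb ((p^^i') y') = orb y'" using orb_eq yS by blast
    have "orb y = orb y'" using o1 o2 z by simp
    then have "rep y = rep y'" unfolding rep_def by simp
    then have yy: "y = y'" using rep_R ai bi by simp
    have ii: "i = i'"
    proof (rule ccontr)
      assume ne: "i \<noteq> i'"
      have gen: "u = u'" if "u < k" "u' < k" "u \<le> u'" "(p^^u) y = (p^^u') y" for u u'
      proof (rule ccontr)
        assume "u \<noteq> u'"
        have zS: "(p^^u) y \<in> S" using funpow_in[OF pp yS(1)] .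
        have "(p^^u') y = (p^^((u' - u) + u)) y" using that(3) by simp
        also have "\<dots> = (p^^(u' - u)) ((p^^u) y)" by (simp add: funpow_add)
        finally have "(p^^(u' - u)) ((p^^u) y) = (p^^u') y" by simp
        then have "(p^^(u' - u)) ((p^^u) y) = (p^^u) y" using that(4) by simp
        moreover have "0 < u' - u" "u' - u < k" using that \<open>u \<noteq> u'\<close> by auto
        ultimately show False using reg_nofix[OF p zS] by blast
      qed
      show False
      proof (cases "i \<le> i'")
        case True then show False using gen[of i i'] ai bi z yy ne by simp
      next
        case False then show False using gen[of i' i] ai bi z yy ne by simp
      qed
    qed
    show "a = b" using ai bi yy ii by simp
  qed
  have h_img: "h ` ({0..<k} \<times> R) = S"
  proof
    show "h ` ({0..<k} \<times> R) \<subseteq> S"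
      using RS funpow_in[OF pp] unfolding h_def by auto
    show "S \<subseteq> h ` ({0..<k} \<times> R)"
    proof
      fix x assume x: "x \<in> S"
      obtain i where i: "i < k" "rep x = (p^^i) x" using rep_orb[of x] unfolding orb_def by auto
      have "(p^^((k - i) mod k)) (rep x) = (p^^((k - i) mod k + i)) x" using i by (simp add: funpow_add)
      also have "\<dots> = (p^^(((k - i) mod k + i) mod k)) x" by (rule reg_mod[OF p x])
      also have "((k - i) mod k + i) mod k = (k - i + i) mod k" by (rule mod_add_left_eq)
      also have "k - i + i = k" using i by simp
      finally have "(p^^((k - i) mod k)) (rep x) = x" by simp
      moreover have "rep x \<in> R" using x unfolding R_def by simp
      moreover have "(k - i) mod k < k" using k by simp
      ultimately show "x \<in> h ` ({0..<k} \<times> R)" unfolding h_def by force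
    qed
  qed
  have finR: "finite R" using fin RS finite_subset by blast
  have "card ({0..<k} \<times> R) = card S" using card_image[OF h_inj] h_img by simp
  then have "k * card R = card S" by (simp add: card_cartesian_product)
  then have cR: "card R = card S div k" using k by (metis nonzero_mult_div_cancel_left neq0_conv)
  obtain e where e: "bij_betw e {0..<card R} R" using ex_bij_betw_nat_finite[OF finR] by blast
  define g where "g = (\<lambda>(i,j). h (i, e j))"
  have "bij_betw g ({0..<k} \<times> {0..<card R}) S"
  proof -
    have b1: "bij_betw (\<lambda>(i,j). (i, e j)) ({0..<k} \<times> {0..<card R}) ({0..<k} \<times> R)"
    proof -
      have bb: "bij_betw (map_prod id e) ({0..<k} \<times> {0..<card R}) ({0..<k} \<times> R)"
        by (rule bij_betw_map_prod[OF bij_betw_id e])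
      have eq: "map_prod id e = (\<lambda>(i,j). (i, e j))" by auto
      show ?thesis using bb unfolding eq .
    qed
    have b2: "bij_betw h ({0..<k} \<times> R) S" using h_inj h_img by (simp add: bij_betw_def)
    have "bij_betw (h \<circ> (\<lambda>(i,j). (i, e j))) ({0..<k} \<times> {0..<card R}) S"
      by (rule bij_betw_trans[OF b1 b2])
    moreover have "h \<circ> (\<lambda>(i,j). (i, e j)) = g" unfolding g_def by auto
    ultimately show ?thesis by simp
  qed
  moreover have "\<forall>i<k. \<forall>j<card R. p (g (i,j)) = g ((i+1) mod k, j)"
  proof (intro allI impI)
    fix i j assume i: "i < k" and j: "j < card R"
    have ejS: "e j \<in> S" using e j RS by (auto simp: bij_betw_def)
    have "p (g (i,j)) = (p^^(Suc i)) (e j)" unfolding g_def h_def by simp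
    also have "\<dots> = (p^^(Suc i mod k)) (e j)" by (rule reg_mod[OF p ejS])
    finally show "p (g (i,j)) = g ((i+1) mod k, j)" unfolding g_def h_def by simp
  qed
  ultimately show ?thesis using cR by auto
qed

definition transp :: "('a \<Rightarrow> 'b) \<Rightarrow> 'a set \<Rightarrow> 'b set \<Rightarrow> ('a \<Rightarrow> 'a) \<Rightarrow> 'b \<Rightarrow> 'b" where
  "transp h A A' q = (\<lambda>z. if z \<in> A' then h (q (inv_into A h z)) else z)"

lemma transp_pow:
  assumes h: "bij_betw h A A'" and q: "q permutes A" and z: "z \<in> A'"
  shows "(transp h A A' q ^^ j) z = h ((q ^^ j) (inv_into A h z))"
proof (induct j)
  case 0
  then show ?case using h z by (simp add: bij_betw_inv_into_right)
next
  case (Suc j)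
  have iz: "inv_into A h z \<in> A" by (rule bij_betw_apply[OF bij_betw_inv_into[OF h] z])
  have w: "(q ^^ j) (inv_into A h z) \<in> A" using funpow_in[OF q iz] .
  have hw: "h ((q ^^ j) (inv_into A h z)) \<in> A'" using h w by (meson bij_betw_apply)
  have "(transp h A A' q ^^ Suc j) z = transp h A A' q (h ((q ^^ j) (inv_into A h z)))"
    using Suc by simp
  also have "\<dots> = h (q (inv_into A h (h ((q ^^ j) (inv_into A h z)))))"
    using hw unfolding transp_def by simp
  also have "inv_into A h (h ((q ^^ j) (inv_into A h z))) = (q ^^ j) (inv_into A h z)"
    using h w by (simp add: bij_betw_inv_into_left)
  finally show ?case by simp
qed

lemma transp_perm:
  assumes h: "bij_betw h A A'" and q: "q permutes A"
  shows "transp h A A' q permutes A'"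
proof (rule bij_imp_permutes)
  have hi: "bij_betw (inv_into A h) A' A" by (rule bij_betw_inv_into[OF h])
  have qb: "bij_betw q A A" by (rule permutes_imp_bij[OF q])
  have b: "bij_betw (h \<circ> (q \<circ> inv_into A h)) A' A'"
    by (rule bij_betw_trans[OF bij_betw_trans[OF hi qb] h])
  have "\<And>z. z \<in> A' \<Longrightarrow> (h \<circ> (q \<circ> inv_into A h)) z = transp h A A' q z"
    unfolding transp_def by simp
  then have "bij_betw (h \<circ> (q \<circ> inv_into A h)) A' A' = bij_betw (transp h A A' q) A' A'"
    by (rule bij_betw_cong)
  then show "bij_betw (transp h A A' q) A' A'" using b by simp
  show "\<And>x. x \<notin> A' \<Longrightarrow> transp h A A' q x = x" unfolding transp_def by simp
qed

lemma reg_transp: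
  assumes h: "bij_betw h A A'" and q: "reg k q A"
  shows "reg k (transp h A A' q) A'"
  unfolding reg_def
proof (intro conjI ballI allI impI)
  have qp: "q permutes A" by (rule reg_perm[OF q])
  show "transp h A A' q permutes A'" by (rule transp_perm[OF h qp])
  fix z assume z: "z \<in> A'"
  have iz: "inv_into A h z \<in> A" by (rule bij_betw_apply[OF bij_betw_inv_into[OF h] z])
  have hz: "h (inv_into A h z) = z" using h z by (simp add: bij_betw_inv_into_right)
  show "(transp h A A' q ^^ k) z = z" using transp_pow[OF h qp z] reg_fix[OF q iz] hz by simp
  fix j assume j: "0 < j \<and> j < k"
  show "(transp h A A' q ^^ j) z \<noteq> z"
  proof
    assume "(transp h A A' q ^^ j) z = z"
    then have "h ((q ^^ j) (inv_into A h z)) = h (inv_into A h z)" using transp_pow[OF h qp z] hz by simp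
    moreover have "(q ^^ j) (inv_into A h z) \<in> A" by (rule funpow_in[OF qp iz])
    moreover have inj: "inj_on h A" using h by (simp add: bij_betw_def)
    ultimately have "(q ^^ j) (inv_into A h z) = inv_into A h z"
      using iz by (simp add: inj_on_eq_iff)
    then show False using reg_nofix[OF q iz] j by blast
  qed
qed

lemma transp_comp:
  assumes h: "bij_betw h A A'" and x: "x permutes A" and y: "y permutes A"
  shows "transp h A A' (x \<circ> y) = transp h A A' x \<circ> transp h A A' y"
proof
  fix z show "transp h A A' (x \<circ> y) z = (transp h A A' x \<circ> transp h A A' y) z"
  proof (cases "z \<in> A'")
    case True
    have iz: "inv_into A h z \<in> A" by (rule bij_betw_apply[OF bij_betw_inv_into[OF h] True])
    have w: "y (inv_into A h z) \<in> A" using permutes_in_image[OF y] iz by simp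
    have hw: "h (y (inv_into A h z)) \<in> A'" using h w by (meson bij_betw_apply)
    have "inv_into A h (h (y (inv_into A h z))) = y (inv_into A h z)"
      using h w by (simp add: bij_betw_inv_into_left)
    then show ?thesis using True hw unfolding transp_def by simp
  next
    case False then show ?thesis unfolding transp_def by simp
  qed
qed

lemma from_model:
  assumes fin: "finite A" and cA: "card A = n" and x0: "reg r x0 A" and y0: "reg r y0 A"
    and s0: "reg m (x0 \<circ> y0) A" and m: "0 < m"
  shows "cycle_class n m \<subseteq> set_square (cycle_class n r)"
proof
  fix \<sigma> assume "\<sigma> \<in> cycle_class n m"
  then have sig: "reg m \<sigma> {0..<n}" unfolding cycle_class_def reg_def by simp
  let ?D = "{0..<m} \<times> {0..<n div m}"
  obtain g1 where g1: "bij_betw g1 ?D A" "\<forall>i<m. \<forall>j<n div m. (x0 \<circ> y0) (g1 (i,j)) = g1 ((i+1) mod m, j)"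
    using reg_std[OF s0 fin m] cA by auto
  obtain g2 where g2: "bij_betw g2 ?D {0..<n}" "\<forall>i<m. \<forall>j<n div m. \<sigma> (g2 (i,j)) = g2 ((i+1) mod m, j)"
    using reg_std[OF sig _ m] by auto
  define h where "h = g2 \<circ> inv_into ?D g1"
  have h: "bij_betw h A {0..<n}" unfolding h_def
    by (rule bij_betw_trans[OF bij_betw_inv_into[OF g1(1)] g2(1)])
  let ?T = "transp h A {0..<n}"
  have xp: "x0 permutes A" by (rule reg_perm[OF x0])
  have yp: "y0 permutes A" by (rule reg_perm[OF y0])
  have "\<sigma> = ?T (x0 \<circ> y0)"
  proof
    fix z show "\<sigma> z = ?T (x0 \<circ> y0) z"
    proof (cases "z \<in> {0..<n}")
      case True
      have "z \<in> g2 ` ?D" using True bij_betw_imp_surj_on[OF g2(1)] by simp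
      then obtain ij where ij: "ij \<in> ?D" "z = g2 ij" by blast
      obtain i j where ijs: "ij = (i,j)" "i < m" "j < n div m" using ij(1) by auto
      have g1ij: "g1 (i,j) \<in> A" using bij_betw_apply[OF g1(1)] ij(1) ijs(1) by simp
      have hg: "h (g1 (i,j)) = z" unfolding h_def using g1(1) ij ijs by (simp add: bij_betw_inv_into_left)
      have iv: "inv_into A h z = g1 (i,j)" using bij_betw_inv_into_left[OF h g1ij] hg by simp
      have nx: "((i+1) mod m, j) \<in> ?D" using ijs m by simp
      have "?T (x0 \<circ> y0) z = h ((x0 \<circ> y0) (g1 (i,j)))" using True iv unfolding transp_def by simp
      also have "\<dots> = h (g1 ((i+1) mod m, j))" using g1(2) ijs by simp
      also have "\<dots> = g2 ((i+1) mod m, j)" unfolding h_def using g1(1) nx by (simp add: bij_betw_inv_into_left)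
      also have "\<dots> = \<sigma> z" using g2(2) ijs ij by simp
      finally show ?thesis by simp
    next
      case False
      then have "\<sigma> z = z" using reg_perm[OF sig] by (simp add: permutes_not_in)
      then show ?thesis using False unfolding transp_def by simp
    qed
  qed
  also have "\<dots> = ?T x0 \<circ> ?T y0" by (rule transp_comp[OF h xp yp])
  finally have eq: "\<sigma> = ?T x0 \<circ> ?T y0" .
  have "?T x0 \<in> cycle_class n r" using reg_transp[OF h x0] unfolding cycle_class_def reg_def by simp
  moreover have "?T y0 \<in> cycle_class n r" using reg_transp[OF h y0] unfolding cycle_class_def reg_def by simp
  ultimately show "\<sigma> \<in> set_square (cycle_class n r)" unfolding set_square_def using eq by blast
qed



lemma reg1: "p permutes S \<Longrightarrow> (\<And>x. x \<in> S \<Longrightarrow> p x = x) \<Longrightarrow> reg 1 p S"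
  unfolding reg_def by auto

lemma hol_idc: "hol r t (\<lambda>_. id) j i = id"
  by (induct j) simp_all

lemma hol_id:
  assumes "\<And>l. l < n \<Longrightarrow> \<psi> ((i + l*t) mod r) = id"
  shows "hol r t \<psi> n i = id"
  using assms by (induct n) simp_all

lemma skew_unit_reg:
  assumes B: "finite B" and r: "0 < r" and a: "coprime a r"
  shows "reg r (skew r a (\<lambda>_. id) B) ({0..<r} \<times> B)"
proof -
  have "reg (r*1) (skew r a (\<lambda>_. id) B) ({0..<r} \<times> B)"
  proof (rule skew_reg[OF B r])
    show "\<And>i. id permutes B" by (rule permutes_id)
    show "0 < r" by (rule r)
    show "(j*a) mod r = 0 \<longleftrightarrow> r dvd j" for j
      using a by (simp add: dvd_eq_mod_eq_0[symmetric] coprime_dvd_mult_left_iff coprime_commute)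
    show "(0::nat) < 1" by simp
    show "reg 1 (hol r a (\<lambda>_. id) r i) B" for i
      unfolding hol_idc by (rule reg1[OF permutes_id]) simp
  qed
  then show ?thesis by simp
qed

definition psiF :: "nat \<Rightarrow> nat \<Rightarrow> nat \<Rightarrow> (nat \<Rightarrow> 'b \<Rightarrow> 'b) \<Rightarrow> nat \<Rightarrow> 'b \<Rightarrow> 'b" where
  "psiF r e' K As i = (if (i*e') mod r < K then As ((i*e') mod r) else id)"

fun prodA :: "(nat \<Rightarrow> 'b \<Rightarrow> 'b) \<Rightarrow> nat \<Rightarrow> 'b \<Rightarrow> 'b" where
  "prodA As 0 = id"
| "prodA As (Suc j) = As j \<circ> prodA As j"

lemma psiF_perm: "(\<And>j. As j permutes B) \<Longrightarrow> psiF r e' K As i permutes B"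
  unfolding psiF_def by (simp add: permutes_id)

lemma prodA_perm: "(\<And>j. As j permutes B) \<Longrightarrow> prodA As j permutes B"
  by (induct j) (simp_all add: permutes_compose)

lemma inv_mod:
  fixes e e' r j :: nat
  assumes "(e*e') mod r = 1" "j < r"
  shows "((j*e) mod r * e') mod r = j"
proof -
  have "((j*e) mod r * e') mod r = (j*e*e') mod r" by (simp add: mod_mult_left_eq)
  also have "j*e*e' = j*(e*e')" by simp
  also have "(j*(e*e')) mod r = (j * ((e*e') mod r)) mod r" by (simp add: mod_mult_right_eq)
  also have "\<dots> = j" using assms by simp
  finally show ?thesis .
qed

lemma hol_Y:
  assumes ee: "(e*e') mod r = 1" and K: "K \<le> r" and j: "j \<le> r"
  shows "hol r e (psiF r e' K As) j 0 = prodA As (min j K)"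
  using j
proof (induct j)
  case 0 then show ?case by simp
next
  case (Suc j)
  have jr: "j < r" using Suc by simp
  have pos: "((0 + j*e) mod r * e') mod r = j" using inv_mod[OF ee jr] by simp
  have "hol r e (psiF r e' K As) (Suc j) 0 = psiF r e' K As ((0 + j*e) mod r) \<circ> prodA As (min j K)"
    using Suc by simp
  also have "psiF r e' K As ((0 + j*e) mod r) = (if j < K then As j else id)"
    unfolding psiF_def pos by simp
  finally show ?case by (cases "j < K") (simp_all add: min_def)
qed

lemma master_Y:
  assumes B: "finite B" and r: "0 < r" and e: "coprime e r" and ee: "(e*e') mod r = 1"
    and K: "K \<le> r" and perm: "\<And>j. As j permutes B" and P: "\<And>b. b \<in> B \<Longrightarrow> prodA As K b = b"
  shows "reg r (skew r e (psiF r e' K As) B) ({0..<r} \<times> B)"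
proof -
  let ?\<psi> = "psiF r e' K As"
  have pp: "\<And>i. ?\<psi> i permutes B" by (rule psiF_perm[OF perm])
  have kt: "(j*e) mod r = 0 \<longleftrightarrow> r dvd j" for j
    using e by (simp add: dvd_eq_mod_eq_0[symmetric] coprime_dvd_mult_left_iff coprime_commute)
  have base: "reg 1 (hol r e ?\<psi> r 0) B"
  proof -
    have "hol r e ?\<psi> r 0 = prodA As K" using hol_Y[OF ee K, of r As] K by (simp add: min_def)
    then show ?thesis using reg1[OF prodA_perm[OF perm] P] by simp
  qed
  have "reg (r*1) (skew r e ?\<psi> B) ({0..<r} \<times> B)"
  proof (rule skew_reg[OF B r pp r kt])
    show "(0::nat) < 1" by simp
    fix i assume i: "i < r"
    have kt0: "(r*e) mod r = 0" by simp
    have "reg 1 (hol r e ?\<psi> r ((0 + ((i*e') mod r)*e) mod r)) B"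
      by (rule hol_walk[OF pp r kt0 base])
    moreover have "((0 + ((i*e') mod r)*e) mod r) = i"
    proof -
      have "((i*e') mod r * e) mod r = (i*e'*e) mod r" by (simp add: mod_mult_left_eq)
      also have "\<dots> = (i * ((e*e') mod r)) mod r" by (simp add: mod_mult_right_eq mult.commute mult.left_commute)
      also have "\<dots> = i" using ee i by simp
      finally show ?thesis by simp
    qed
    ultimately show "reg 1 (hol r e ?\<psi> r i) B" by simp
  qed
  then show ?thesis by simp
qed

lemma skew_comp:
  assumes perm: "\<And>i. \<psi> i permutes B" and ae: "(a + e) mod r = c mod r"
  shows "skew r a (\<lambda>_. id) B \<circ> skew r e \<psi> B = skew r c \<psi> B"
proof
  fix x show "(skew r a (\<lambda>_. id) B \<circ> skew r e \<psi> B) x = skew r c \<psi> B x"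
  proof (cases x)
    case (Pair i b)
    show ?thesis
    proof (cases "i < r \<and> b \<in> B")
      case True
      have pb: "\<psi> i b \<in> B" using permutes_in_image[OF perm] True by simp
      have r0: "0 < r" using True by simp
      have "((i + e) mod r + a) mod r = (i + c) mod r"
      proof -
        have "((i + e) mod r + a) mod r = (i + e + a) mod r" by (rule mod_add_left_eq)
        also have "i + e + a = i + (a + e)" by simp
        also have "(i + (a + e)) mod r = (i + (a + e) mod r) mod r" by (rule mod_add_right_eq[symmetric])
        also have "\<dots> = (i + c mod r) mod r" by (simp only: ae)
        also have "\<dots> = (i + c) mod r" by (rule mod_add_right_eq)
        finally show ?thesis .
      qed
      then show ?thesis using True pb r0 Pair by (simp add: skew_apply)
    next
      case False
      then show ?thesis using Pair by (simp add: skew_out)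
    qed
  qed
qed

lemma key_distinct:
  fixes c f r e e' j0 j' n :: nat
  assumes cf: "r = c*f" and c: "0 < c" and ee: "(e*e') mod r = 1" and j0: "j0 < c" and j': "j' < c"
    and eq: "(j'*e) mod r = (j0*e + n*c) mod r"
  shows "j' = j0"
proof -
  have cr: "c dvd r" using cf by simp
  have "(j'*e) mod c = (j0*e + n*c) mod c"
    using arg_cong[OF eq, of "\<lambda>x. x mod c"] by (simp add: mod_mod_cancel[OF cr])
  then have m1: "(j'*e) mod c = (j0*e) mod c" by simp
  have ec: "(e*e') mod c = 1 mod c"
    using arg_cong[OF ee, of "\<lambda>x. x mod c"] by (simp add: mod_mod_cancel[OF cr])
  have "(j'*e*e') mod c = (j0*e*e') mod c"
    by (rule mod_mult_cong[OF m1 refl])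
  moreover have "(j'*e*e') mod c = j' mod c"
  proof -
    have "(j'*e*e') mod c = (j' * (e*e')) mod c" by (simp only: mult.assoc)
    also have "\<dots> = (j' * ((e*e') mod c)) mod c" by (rule mod_mult_right_eq[symmetric])
    also have "\<dots> = (j' * (1 mod c)) mod c" by (simp only: ec)
    also have "\<dots> = (j' * 1) mod c" by (rule mod_mult_right_eq)
    finally show ?thesis by simp
  qed
  moreover have "(j0*e*e') mod c = j0 mod c"
  proof -
    have "(j0*e*e') mod c = (j0 * (e*e')) mod c" by (simp only: mult.assoc)
    also have "\<dots> = (j0 * ((e*e') mod c)) mod c" by (rule mod_mult_right_eq[symmetric])
    also have "\<dots> = (j0 * (1 mod c)) mod c" by (simp only: ec)
    also have "\<dots> = (j0 * 1) mod c" by (rule mod_mult_right_eq)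
    finally show ?thesis by simp
  qed
  ultimately have "j' mod c = j0 mod c" by simp
  then show ?thesis using j0 j' by simp
qed

lemma master_S:
  assumes B: "finite B" and cf: "r = c*f" and c: "0 < c" and f: "0 < f"
    and ee: "(e*e') mod r = 1" and perm: "\<And>j. As j permutes B" and d: "0 < d"
    and A: "\<And>j. j < c \<Longrightarrow> reg d (As j) B"
  shows "reg (f*d) (skew r c (psiF r e' c As) B) ({0..<r} \<times> B)"
proof -
  let ?\<psi> = "psiF r e' c As"
  have r: "0 < r" using cf c f by simp
  have pp: "\<And>i. ?\<psi> i permutes B" by (rule psiF_perm[OF perm])
  have e'e: "(e'*e) mod r = 1" using ee by (simp add: mult.commute)
  have kt: "(j*c) mod r = 0 \<longleftrightarrow> f dvd j" for j
  proof -
    have "(j*c) mod r = c * (j mod f)" using cf by (simp add: mult.commute mod_mult_mult1)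
    then show ?thesis using c by (simp add: dvd_eq_mod_eq_0)
  qed
  have kt0: "(f*c) mod r = 0" using kt by simp
  have base: "hol r c ?\<psi> f ((j0*e) mod r) = As j0" if j0: "j0 < c" for j0
  proof -
    let ?p = "(j0*e) mod r"
    have pr: "?p < r" using r by simp
    have "c \<le> c*f" using f by simp
    then have j0r: "j0 < r" using j0 cf by linarith
    have pe: "(?p * e') mod r = j0" by (rule inv_mod[OF ee j0r])
    have h1: "hol r c ?\<psi> 1 ?p = As j0" using pe j0 pr unfolding psiF_def by simp
    have hid: "hol r c ?\<psi> (f - 1) ((?p + 1*c) mod r) = id"
    proof (rule hol_id)
      fix l assume l: "l < f - 1"
      let ?q = "((?p + 1*c) mod r + l*c) mod r"
      have q: "?q = (j0*e + (l+1)*c) mod r"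
      proof -
        have "?q = (?p + 1*c + l*c) mod r" by (rule mod_add_left_eq)
        also have "?p + 1*c + l*c = ?p + (l+1)*c" by simp
        also have "(?p + (l+1)*c) mod r = (j0*e + (l+1)*c) mod r" by (rule mod_add_left_eq)
        finally show ?thesis .
      qed
      show "?\<psi> ?q = id"
      proof (rule ccontr)
        assume ne: "?\<psi> ?q \<noteq> id"
        let ?j' = "(?q * e') mod r"
        have j'c: "?j' < c" using ne unfolding psiF_def by (auto split: if_splits)
        have qr: "?q < r" using r by simp
        have "(?j' * e) mod r = ?q" by (rule inv_mod[OF e'e qr])
        then have "(?j' * e) mod r = (j0*e + (l+1)*c) mod r" using q by simp
        then have jj: "?j' = j0" by (rule key_distinct[OF cf c ee j0 j'c])
        have "(?p + (l+1)*c) mod r = ?p"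
        proof -
          have "(?p + (l+1)*c) mod r = (j0*e + (l+1)*c) mod r" by (rule mod_add_left_eq)
          also have "\<dots> = (?j' * e) mod r" using q \<open>(?j' * e) mod r = ?q\<close> by simp
          also have "\<dots> = ?p" using jj by simp
          finally show ?thesis .
        qed
        then have "((l+1)*c) mod r = 0" by (rule mod_add_cancel_aux[OF pr])
        then have "f dvd (l+1)" by (rule kt[of "l+1", THEN iffD1])
        moreover have "0 < l + 1" "l + 1 < f" using l by auto
        ultimately show False by (simp add: nat_dvd_not_less)
      qed
    qed
    have "hol r c ?\<psi> (1 + (f - 1)) ?p = hol r c ?\<psi> (f - 1) ((?p + 1*c) mod r) \<circ> hol r c ?\<psi> 1 ?p"
      by (rule hol_add)
    then show ?thesis using hid h1 f by simp
  qed
  have "reg (f*d) (skew r c ?\<psi> B) ({0..<r} \<times> B)"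
  proof (rule skew_reg[OF B r pp f kt d])
    fix i assume i: "i < r"
    let ?j0 = "(i*e') mod c"
    let ?p = "(?j0*e) mod r"
    have j0c: "?j0 < c" using c by simp
    have pr: "?p < r" using r by simp
    have breg: "reg d (hol r c ?\<psi> f ?p) B" using base[OF j0c] A[OF j0c] by simp
    have cr: "c dvd r" using cf by simp
    have pc: "?p mod c = i mod c"
    proof -
      have "?p mod c = (?j0*e) mod c" by (simp add: mod_mod_cancel[OF cr])
      also have "\<dots> = (i*e'*e) mod c" by (simp add: mod_mult_left_eq)
      also have "\<dots> = (i*(e*e')) mod c" by (simp only: mult.commute mult.left_commute)
      also have "\<dots> = (i*((e*e') mod c)) mod c" by (rule mod_mult_right_eq[symmetric])
      also have "(e*e') mod c = 1 mod c"
        using arg_cong[OF ee, of "\<lambda>x. x mod c"] by (simp add: mod_mod_cancel[OF cr])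
      also have "(i * (1 mod c)) mod c = (i*1) mod c" by (rule mod_mult_right_eq)
      finally show ?thesis by simp
    qed
    have dv: "c dvd (i + r - ?p)"
    proof -
      have "(i + r) mod c = i mod c" using cr by (simp add: mod_add_right_eq[symmetric])
      then have "(i + r) mod c = ?p mod c" using pc by simp
      moreover have "?p \<le> i + r" using pr by simp
      ultimately show ?thesis by (simp add: mod_eq_dvd_iff_nat)
    qed
    define l where "l = (i + r - ?p) div c"
    have lc: "l*c = i + r - ?p" unfolding l_def using dv by simp
    have "(?p + l*c) mod r = i"
    proof -
      have "?p + l*c = i + r" using lc pr by simp
      then show ?thesis using i by simp
    qed
    moreover have "reg d (hol r c ?\<psi> f ((?p + l*c) mod r)) B"
      by (rule hol_walk[OF pp pr _ breg]) (simp add: cf)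
    ultimately show "reg d (hol r c ?\<psi> f i) B" by simp
  qed
  then show ?thesis .
qed

lemma mod_helper:
  fixes x n q a :: nat
  assumes "x = n*q + a" "a < n"
  shows "x mod n = a"
proof -
  have "x mod n = (n*q + a) mod n" using assms(1) by simp
  also have "\<dots> = a mod n" by (rule mod_mult_self4)
  finally show ?thesis using assms(2) by simp
qed

lemma master_S1:
  assumes B: "finite B" and r: "3 \<le> r" and perm: "\<And>j. As j permutes B" and d: "0 < d"
    and H: "reg d (As 1 \<circ> As 2 \<circ> As 0) B"
  shows "reg (r*d) (skew r 1 (psiF r (r-1) 3 As) B) ({0..<r} \<times> B)"
proof -
  let ?\<psi> = "psiF r (r-1) 3 As"
  obtain s where s: "r = s + 3" using r by (metis add.commute le_Suc_ex)
  have r0: "0 < r" using r by simp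
  have pp: "\<And>i. ?\<psi> i permutes B" by (rule psiF_perm[OF perm])
  have p0: "?\<psi> 0 = As 0" unfolding psiF_def using r0 by simp
  have p1: "?\<psi> (s+2) = As 1"
  proof -
    have "(s+2)*(s+2) = (s+3)*(s+1) + 1" by (simp add: algebra_simps)
    then have "((s+2)*(s+2)) mod (s+3) = 1" by (rule mod_helper) simp
    then show ?thesis unfolding psiF_def s by simp
  qed
  have p2: "?\<psi> (s+1) = As 2"
  proof -
    have "(s+1)*(s+2) = (s+3)*s + 2" by (simp add: algebra_simps)
    then have "((s+1)*(s+2)) mod (s+3) = 2" by (rule mod_helper) simp
    then show ?thesis unfolding psiF_def s by simp
  qed
  have pid: "?\<psi> (u+1) = id" if u: "u < s" for u
  proof -
    have "(u+1)*(s+2) = (s+3)*u + (s + 2 - u)" using u by (simp add: algebra_simps)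
    then have "((u+1)*(s+2)) mod (s+3) = s + 2 - u" by (rule mod_helper) simp
    moreover have "\<not> s + 2 - u < 3" using u by simp
    ultimately show ?thesis unfolding psiF_def s by simp
  qed
  have hA: "hol r 1 ?\<psi> (1 + s) 0 = As 0"
  proof -
    have "hol r 1 ?\<psi> (1 + s) 0 = hol r 1 ?\<psi> s ((0 + 1*1) mod r) \<circ> hol r 1 ?\<psi> 1 0"
      by (rule hol_add)
    moreover have "hol r 1 ?\<psi> s ((0 + 1*1) mod r) = id"
    proof (rule hol_id)
      fix l assume l: "l < s"
      have "((0 + 1*1) mod r + l*1) mod r = l + 1" using s l by simp
      then show "?\<psi> (((0 + 1*1) mod r + l*1) mod r) = id" using pid[OF l] by simp
    qed
    moreover have "hol r 1 ?\<psi> 1 0 = As 0" using p0 r0 by simp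
    ultimately show ?thesis by simp
  qed
  have hB: "hol r 1 ?\<psi> 2 (s+1) = As 1 \<circ> As 2"
  proof -
    have "hol r 1 ?\<psi> 2 (s+1) = ?\<psi> ((s+1+1*1) mod r) \<circ> (?\<psi> ((s+1+0*1) mod r) \<circ> id)"
      by (simp add: numeral_2_eq_2)
    moreover have "(s+1+1*1) mod r = s+2" "(s+1+0*1) mod r = s+1" using s by simp_all
    ultimately show ?thesis using p1 p2 by simp
  qed
  have hr: "hol r 1 ?\<psi> r 0 = As 1 \<circ> As 2 \<circ> As 0"
  proof -
    have h: "hol r 1 ?\<psi> ((1 + s) + 2) 0 = hol r 1 ?\<psi> 2 ((0 + (1+s)*1) mod r) \<circ> hol r 1 ?\<psi> (1+s) 0"
      by (rule hol_add)
    have e2: "(0 + (1+s)*1) mod r = s + 1" using s by simp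
    have e1: "(1 + s) + 2 = r" using s by simp
    have "hol r 1 ?\<psi> r 0 = hol r 1 ?\<psi> 2 (s+1) \<circ> hol r 1 ?\<psi> (1+s) 0"
      using h unfolding e1 e2 .
    then show ?thesis by (simp only: hA hB)
  qed
  have kt: "(j*1) mod r = 0 \<longleftrightarrow> r dvd j" for j by (simp add: dvd_eq_mod_eq_0)
  have "reg (r*d) (skew r 1 ?\<psi> B) ({0..<r} \<times> B)"
  proof (rule skew_reg[OF B r0 pp r0 kt d])
    fix i assume i: "i < r"
    have base: "reg d (hol r 1 ?\<psi> r 0) B" using hr H by simp
    have "reg d (hol r 1 ?\<psi> r ((0 + i*1) mod r)) B"
      by (rule hol_walk[OF pp r0 _ base]) simp
    then show "reg d (hol r 1 ?\<psi> r i) B" using i by simp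
  qed
  then show ?thesis .
qed



lemma reg_cong:
  assumes "reg k p S" "\<And>x. x \<in> S \<Longrightarrow> q x = p x" "\<And>x. x \<notin> S \<Longrightarrow> q x = x"
  shows "reg k q S"
proof -
  have "q = p"
  proof
    fix x show "q x = p x"
      using assms reg_perm[OF assms(1)] by (cases "x \<in> S") (simp_all add: permutes_not_in)
  qed
  then show ?thesis using assms(1) by simp
qed

lemma coprime_d2:
  fixes d :: nat
  assumes "odd d"
  shows "coprime (d - 2) d"
proof (cases "d = 1")
  case True then show ?thesis by simp
next
  case False
  then have d3: "d \<ge> 3" using assms by (cases d; cases "d - 1") (auto, presburger)
  show ?thesis
  proof (rule coprimeI)
    fix c assume c1: "c dvd d - 2" and c2: "c dvd d"
    have "d = (d - 2) + 2" using d3 by simp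
    then have "c dvd 2" using c1 c2 by (metis dvd_add_right_iff)
    moreover have "odd c" using c2 assms by (auto elim: dvdE)
    moreover have "c \<le> 2" using \<open>c dvd 2\<close> by (simp add: dvd_imp_le)
    ultimately have "c \<in> {0,1,2}" by auto
    then have "c = 1" using \<open>odd c\<close> by auto
    then show "is_unit c" by simp
  qed
qed

lemma rot_reg:
  fixes q :: nat
  assumes "0 < d"
  shows "reg d (skew d 1 (\<lambda>_. id) {0..<q}) ({0..<d} \<times> {0..<q})"
  by (rule skew_unit_reg) (use assms in simp_all)

lemma prodA_cong: "(\<And>i. i < j \<Longrightarrow> As i = T i) \<Longrightarrow> prodA As j = prodA T j"
  by (induct j) simp_all

lemma gadget_ext:
  assumes d: "0 < d" and p: "reg d p B" and n0: "n0 \<le> c" and ev: "even (c - n0)"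
    and Tp: "\<And>j. T j permutes B" and Tr: "\<And>j. j < n0 \<Longrightarrow> reg d (T j) B"
    and TP: "\<And>b. b \<in> B \<Longrightarrow> prodA T n0 b = b"
  shows "\<exists>As. (\<forall>j. As j permutes B) \<and> (\<forall>j<c. reg d (As j) B) \<and> (\<forall>b\<in>B. prodA As c b = b)"
proof -
  define As where "As j = (if j < n0 then T j else if even (j - n0) then p else p ^^ (d - 1))" for j
  have pp: "p permutes B" by (rule reg_perm[OF p])
  have perm: "\<forall>j. As j permutes B"
  proof
    fix j show "As j permutes B" unfolding As_def using Tp[of j] pp perm_funpow[OF pp, of "d-1"] by simp
  qed
  have preg: "reg d (p ^^ (d-1)) B" by (rule reg_pow[OF p coprime_diff_one_left_nat[OF d] d])
  have rg: "\<forall>j<c. reg d (As j) B" unfolding As_def using Tr p preg by simp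
  have base: "prodA As n0 = prodA T n0" by (rule prodA_cong) (simp add: As_def)
  have ind: "\<forall>b\<in>B. prodA As (n0 + 2*k) b = b" for k
  proof (induct k)
    case 0 then show ?case using base TP by simp
  next
    case (Suc k)
    have a1: "As (n0 + 2*k) = p" unfolding As_def by simp
    have a2: "As (Suc (n0 + 2*k)) = p ^^ (d-1)" unfolding As_def by simp
    have "prodA As (n0 + 2 * Suc k) = As (Suc (n0 + 2*k)) \<circ> (As (n0 + 2*k) \<circ> prodA As (n0 + 2*k))"
      by simp
    then have e: "prodA As (n0 + 2 * Suc k) = p ^^ (d-1) \<circ> (p \<circ> prodA As (n0 + 2*k))"
      using a1 a2 by simp
    show ?case
    proof
      fix b assume b: "b \<in> B"
      have "(p ^^ (d-1)) (p b) = (p ^^ d) b"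
      proof -
        have "d = Suc (d - 1)" using d by simp
        then have "(p ^^ d) b = (p ^^ (d-1) \<circ> p) b" by (metis funpow_Suc_right)
        then show ?thesis by simp
      qed
      then show "prodA As (n0 + 2 * Suc k) b = b" using e Suc b reg_fix[OF p b] by simp
    qed
  qed
  obtain k where "c = n0 + 2*k" using n0 ev by (metis evenE le_add_diff_inverse)
  then have "\<forall>b\<in>B. prodA As c b = b" using ind by simp
  then show ?thesis using perm rg by blast
qed

lemma pow_pred_app:
  assumes "0 < d"
  shows "(p ^^ (d-1)) (p b) = (p ^^ d) b"
proof -
  have "d = Suc (d - 1)" using assms by simp
  then have "(p ^^ d) b = (p ^^ (d-1) \<circ> p) b" by (metis funpow_Suc_right)
  then show ?thesis by simp
qed

lemma funpow_two: "(f ^^ (n + 2)) x = (f ^^ n) (f (f x))"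
proof -
  have "(f ^^ (n + 2)) x = (f ^^ n) ((f ^^ 2) x)" by (simp only: funpow_add comp_apply)
  then show ?thesis by (simp add: numeral_2_eq_2)
qed

lemma triple_gadget:
  fixes q :: nat
  assumes d: "0 < d"
  shows "\<exists>p a0 a1 a2. reg d p ({0..<d} \<times> ({0..<2::nat} \<times> {0..<q})) \<and>
    reg d a0 ({0..<d} \<times> ({0..<2::nat} \<times> {0..<q})) \<and> reg d a1 ({0..<d} \<times> ({0..<2::nat} \<times> {0..<q})) \<and>
    reg d a2 ({0..<d} \<times> ({0..<2::nat} \<times> {0..<q})) \<and>
    (\<forall>b\<in>{0..<d} \<times> ({0..<2::nat} \<times> {0..<q}). a2 (a1 (a0 b)) = b)"
proof -
  let ?B = "{0..<2::nat} \<times> {0..<q}"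
  let ?S = "{0..<d} \<times> ?B"
  have finB: "finite ?B" by simp
  let ?p = "skew d 1 (\<lambda>_. id) ?B"
  have p: "reg d ?p ?S" by (rule skew_unit_reg[OF finB d]) simp
  show ?thesis
  proof (cases "odd d")
    case True
    have a2: "reg d (?p ^^ (d-2)) ?S" by (rule reg_pow[OF p coprime_d2[OF True] d])
    have m0: "(d - 2 + 2) mod d = 0"
    proof (cases "d = 1")
      case False
      then have "d - 2 + 2 = d" using d True by (cases d; cases "d - 1") auto
      then show ?thesis by simp
    qed simp
    have "\<forall>b\<in>?S. (?p ^^ (d-2)) (?p (?p b)) = b"
    proof
      fix b assume b: "b \<in> ?S"
      have "(?p ^^ (d-2)) (?p (?p b)) = (?p ^^ (d - 2 + 2)) b" by (rule funpow_two[symmetric])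
      also have "\<dots> = (?p ^^ ((d - 2 + 2) mod d)) b" by (rule reg_mod[OF p b])
      finally show "(?p ^^ (d-2)) (?p (?p b)) = b" using m0 by simp
    qed
    then show ?thesis using p a2 by blast
  next
    case False
    then obtain f where f: "d = 2*f" by (auto elim: evenE)
    have f0: "0 < f" using f d by simp
    have d2: "2 \<le> d" using f f0 by simp
    let ?\<tau> = "skew 2 1 (\<lambda>_. id) {0..<q}"
    have tau: "reg 2 ?\<tau> ?B" by (rule skew_unit_reg) simp_all
    let ?As = "\<lambda>_::nat. ?\<tau>"
    have tperm: "\<And>j. ?As j permutes ?B" using reg_perm[OF tau] by simp
    have ee: "(1*1) mod d = 1" using d2 by simp
    let ?Y = "skew d 1 (psiF d 1 2 ?As) ?B"
    have Y: "reg d ?Y ?S"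
    proof (rule master_Y[OF finB d _ ee d2 tperm])
      show "coprime 1 d" by simp
      fix b assume b: "b \<in> ?B"
      have "prodA ?As 2 b = (?\<tau> ^^ 2) b" by (simp add: numeral_2_eq_2)
      then show "prodA ?As 2 b = b" using reg_fix[OF tau b] by simp
    qed
    have comp: "?p \<circ> ?Y = skew d 2 (psiF d 1 2 ?As) ?B"
      by (rule skew_comp) (use psiF_perm[OF tperm] in \<open>simp_all add: numeral_2_eq_2\<close>)
    have "reg (f*2) (skew d 2 (psiF d 1 2 ?As) ?B) ?S"
      by (rule master_S[OF finB _ _ f0 ee tperm]) (use f tau in auto)
    then have sg: "reg d (?p \<circ> ?Y) ?S" using comp f by (simp add: mult.commute)
    have a2: "reg d ((?p \<circ> ?Y) ^^ (d-1)) ?S" by (rule reg_pow[OF sg coprime_diff_one_left_nat[OF d] d])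
    have "\<forall>b\<in>?S. ((?p \<circ> ?Y) ^^ (d-1)) (?p (?Y b)) = b"
    proof
      fix b assume b: "b \<in> ?S"
      have "((?p \<circ> ?Y) ^^ (d-1)) (?p (?Y b)) = ((?p \<circ> ?Y) ^^ (d-1)) ((?p \<circ> ?Y) b)" by simp
      also have "\<dots> = ((?p \<circ> ?Y) ^^ d) b" by (rule pow_pred_app[OF d])
      also have "\<dots> = b" by (rule reg_fix[OF sg b])
      finally show "((?p \<circ> ?Y) ^^ (d-1)) (?p (?Y b)) = b" .
    qed
    then show ?thesis using p Y a2 by blast
  qed
qed

lemma pow_pred_app2:
  assumes "0 < d"
  shows "p ((p ^^ (d-1)) b) = (p ^^ d) b"
proof -
  have "d = Suc (d - 1)" using assms by simp
  then have "(p ^^ d) b = (p \<circ> p ^^ (d-1)) b" by (metis funpow.simps(2))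
  then show ?thesis by simp
qed

lemma comm_gadget:
  fixes q :: nat
  assumes d: "0 < d"
  shows "\<exists>As. (\<forall>j. As j permutes ({0..<2::nat} \<times> ({0..<d} \<times> {0..<q}))) \<and>
    (\<forall>b\<in>{0..<2::nat} \<times> ({0..<d} \<times> {0..<q}). prodA As 3 b = b) \<and>
    reg d (As 1 \<circ> As 2 \<circ> As 0) ({0..<2::nat} \<times> ({0..<d} \<times> {0..<q}))"
proof -
  let ?T = "{0..<d} \<times> {0..<q}"
  let ?S = "{0..<2::nat} \<times> ?T"
  have finT: "finite ?T" by simp
  let ?\<rho> = "skew d 1 (\<lambda>_. id) {0..<q}"
  have rho: "reg d ?\<rho> ?T" by (rule skew_unit_reg) (use d in simp_all)
  let ?\<rho>' = "?\<rho> ^^ (d-1)"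
  have rho': "reg d ?\<rho>' ?T" by (rule reg_pow[OF rho coprime_diff_one_left_nat[OF d] d])
  have rp: "?\<rho> permutes ?T" by (rule reg_perm[OF rho])
  have rp': "?\<rho>' permutes ?T" by (rule reg_perm[OF rho'])
  define Bm where "Bm = skew 2 0 (\<lambda>i. if i = 0 then ?\<rho> else id) ?T"
  define Bi where "Bi = skew 2 0 (\<lambda>i. if i = 0 then ?\<rho>' else id) ?T"
  define C where "C = skew 2 1 (\<lambda>_. id) ?T"
  define As where "As j = (if j = 0 then Bi \<circ> C else if j = 1 then Bm else C)" for j :: nat
  have pBm: "Bm permutes ?S" unfolding Bm_def by (rule skew_perm[OF finT]) (use rp permutes_id[of ?T] in auto)
  have pBi: "Bi permutes ?S" unfolding Bi_def by (rule skew_perm[OF finT]) (use rp' permutes_id[of ?T] in auto)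
  have Creg: "reg 2 C ?S" unfolding C_def by (rule skew_unit_reg[OF finT]) simp_all
  have pC: "C permutes ?S" by (rule reg_perm[OF Creg])
  have perm: "\<forall>j. As j permutes ?S" unfolding As_def using pBm pBi pC permutes_compose by simp
  have Bapp: "Bm (i,t) = (i, if i = 0 then ?\<rho> t else t)" if "i < 2" "t \<in> ?T" for i t
    unfolding Bm_def using that by (simp add: skew_apply)
  have Biapp: "Bi (i,t) = (i, if i = 0 then ?\<rho>' t else t)" if "i < 2" "t \<in> ?T" for i t
    unfolding Bi_def using that by (simp add: skew_apply)
  have Capp: "C (i,t) = ((i + 1) mod 2, t)" if "i < 2" "t \<in> ?T" for i t
    unfolding C_def using that by (simp add: skew_apply)
  have rr: "?\<rho> (?\<rho>' t) = t" if "t \<in> ?T" for t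
    using pow_pred_app2[OF d, of ?\<rho> t] reg_fix[OF rho that] by simp
  have r'T: "?\<rho>' t \<in> ?T" if "t \<in> ?T" for t using permutes_in_image[OF rp'] that by simp
  have rT: "?\<rho> t \<in> ?T" if "t \<in> ?T" for t using permutes_in_image[OF rp] that by simp
  have P3: "\<forall>b\<in>?S. prodA As 3 b = b"
  proof
    fix b assume b: "b \<in> ?S"
    obtain i t where it: "b = (i,t)" "i < 2" "t \<in> ?T" using b by auto
    have "prodA As 3 b = C (Bm (Bi (C b)))" by (simp add: numeral_3_eq_3 As_def)
    also have "\<dots> = b"
    proof (cases "i = 0")
      case True
      then show ?thesis using it Capp Bapp Biapp by simp
    next
      case False
      then have i1: "i = 1" using it by simp
      show ?thesis using it i1 Capp Bapp Biapp r'T rr by simp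
    qed
    finally show "prodA As 3 b = b" .
  qed
  let ?\<psi> = "\<lambda>i::nat. if i = 0 then ?\<rho> else ?\<rho>'"
  have H: "reg (1*d) (skew 2 0 ?\<psi> ?T) ?S"
  proof (rule skew_reg[OF finT])
    show "\<And>i. ?\<psi> i permutes ?T" using rp rp' by simp
    fix i :: nat assume i: "i < 2"
    show "reg d (hol 2 0 ?\<psi> 1 i) ?T" using i rho rho' by simp
  qed (use d in simp_all)
  have "reg d (As 1 \<circ> As 2 \<circ> As 0) ?S"
  proof (rule reg_cong[of d "skew 2 0 ?\<psi> ?T"])
    show "reg d (skew 2 0 ?\<psi> ?T) ?S" using H by simp
    fix x assume x: "x \<in> ?S"
    obtain i t where it: "x = (i,t)" "i < 2" "t \<in> ?T" using x by auto
    have "(As 1 \<circ> As 2 \<circ> As 0) x = Bm (C (Bi (C x)))" by (simp add: As_def)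
    also have "\<dots> = skew 2 0 ?\<psi> ?T x"
    proof (cases "i = 0")
      case True
      then show ?thesis using it Capp Bapp Biapp by (simp add: skew_apply)
    next
      case False
      then have i1: "i = 1" using it by simp
      show ?thesis using it i1 Capp Bapp Biapp r'T by (simp add: skew_apply)
    qed
    finally show "(As 1 \<circ> As 2 \<circ> As 0) x = skew 2 0 ?\<psi> ?T x" .
  next
    fix x assume x: "x \<notin> ?S"
    then show "(As 1 \<circ> As 2 \<circ> As 0) x = x"
      using pBm pBi pC by (simp add: As_def permutes_not_in)
  qed
  then show ?thesis using perm P3 by blast
qed



function cpart :: "nat \<Rightarrow> nat \<Rightarrow> nat" where
  "cpart r c = (if r = 0 \<or> gcd r c = 1 then r else cpart (r div gcd r c) c)"
  by auto
termination
proof (relation "measure (\<lambda>(r,c). r)")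
  fix r c :: nat
  assume h: "\<not> (r = 0 \<or> gcd r c = 1)"
  then have g0: "gcd r c \<noteq> 0" by simp
  then have "1 < gcd r c" using h by linarith
  then show "((r div gcd r c, c), (r, c)) \<in> measure (\<lambda>(r,c). r)" using h by simp
qed simp

declare cpart.simps[simp del]

lemma cpart_props:
  "0 < r \<Longrightarrow> 0 < cpart r c \<and> cpart r c dvd r \<and> coprime (cpart r c) c \<and>
     (\<exists>P k. r = cpart r c * P \<and> P dvd c ^ k)"
proof (induct r c rule: cpart.induct)
  case (1 r c)
  show ?case
  proof (cases "gcd r c = 1")
    case True
    have "cpart r c = (if r = 0 \<or> gcd r c = 1 then r else cpart (r div gcd r c) c)" by (rule cpart.simps)
    then have "cpart r c = r" using True by simp
    moreover have "coprime r c" using True by (simp add: coprime_iff_gcd_eq_1)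
    moreover have "\<exists>P k. r = r * P \<and> P dvd c ^ k" by (rule exI[of _ 1], rule exI[of _ 0]) simp
    ultimately show ?thesis using 1(2) by simp
  next
    case False
    define g where "g = gcd r c"
    have "cpart r c = (if r = 0 \<or> gcd r c = 1 then r else cpart (r div gcd r c) c)" by (rule cpart.simps)
    then have e: "cpart r c = cpart (r div g) c" using 1(2) False unfolding g_def by simp
    have gd: "g dvd r" unfolding g_def by simp
    have gc: "g dvd c" unfolding g_def by simp
    have g0: "g \<noteq> 0" using 1(2) unfolding g_def by simp
    obtain k where rk: "r = g * k" using gd by (rule dvdE)
    have kd: "r div g = k" using rk g0 by simp
    have pos: "0 < k" using rk 1(2) by (cases k) auto
    have pos': "0 < r div gcd r c" using kd pos unfolding g_def by simp
    have IH0: "0 < cpart (r div gcd r c) c \<and> cpart (r div gcd r c) c dvd r div gcd r c \<and>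
        coprime (cpart (r div gcd r c) c) c \<and>
        (\<exists>P k. r div gcd r c = cpart (r div gcd r c) c * P \<and> P dvd c ^ k)"
      by (rule 1(1)) (use False pos' 1(2) in simp_all)
    have IH: "0 < cpart k c \<and> cpart k c dvd k \<and> coprime (cpart k c) c \<and>
        (\<exists>P k'. k = cpart k c * P \<and> P dvd c ^ k')"
      using IH0 kd unfolding g_def by simp
    then obtain P k' where Pk: "k = cpart k c * P" "P dvd c ^ k'" by blast
    have ek: "cpart r c = cpart k c" using e kd by simp
    have "r = g * k" by (rule rk)
    also have "\<dots> = g * (cpart k c * P)" by (rule arg_cong[OF Pk(1)])
    also have "\<dots> = cpart r c * (g * P)" using ek by (simp add: ac_simps)
    finally have "r = cpart r c * (g * P)" .
    moreover have "g * P dvd c ^ Suc k'" using Pk(2) gc by (simp add: mult_dvd_mono)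
    moreover have "cpart r c dvd r"
    proof -
      have "k dvd r" using rk by simp
      moreover have "cpart k c dvd k" using IH by simp
      ultimately show ?thesis using ek by (simp add: dvd_trans[of "cpart k c" k r])
    qed
    moreover have "0 < cpart r c" "coprime (cpart r c) c" using IH ek by simp_all
    ultimately show ?thesis by blast
  qed
qed

lemma unit_nat: "(x::nat) dvd 1 \<Longrightarrow> is_unit x" by simp

lemma units_exist:
  fixes r c :: nat
  assumes r: "1 < r" and c0: "0 < c" and cr: "c dvd r" and par: "even c \<or> odd r"
  shows "\<exists>a e e'. coprime a r \<and> coprime e r \<and> (a + e) mod r = c mod r \<and> (e*e') mod r = 1"
proof -
  define R where "R = cpart r c"
  have props: "0 < R \<and> R dvd r \<and> coprime R c \<and> (\<exists>P k. r = R * P \<and> P dvd c ^ k)"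
    using cpart_props[of r c] r unfolding R_def by simp
  then obtain P k where Pk: "r = R * P" "P dvd c ^ k" by blast
  have Rr: "R dvd r" and Rc: "coprime R c" using props by auto
  have oddR: "odd R"
  proof
    assume eR: "even R"
    show False
    proof (cases "odd r")
      case True then show False using eR Rr by (auto elim: dvdE)
    next
      case False
      then have "even c" using par by simp
      then have "is_unit (2::nat)" using coprime_common_divisor[OF Rc eR] by simp
      then show False by simp
    qed
  qed
  have "even (R + 1)" using oddR by simp
  then obtain w where w: "R + 1 = 2 * w" by (rule evenE)
  define A0 where "A0 = c * w + R"
  have cA0c: "coprime A0 c"
  proof (rule coprimeI)
    fix x assume x1: "x dvd A0" and x2: "x dvd c"
    have "x dvd c * w" using x2 by simp
    then have "x dvd R" using x1 unfolding A0_def by (simp add: dvd_add_right_iff)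
    then show "is_unit x" using coprime_common_divisor[OF Rc _ x2] by simp
  qed
  have cA0R: "coprime A0 R"
  proof (rule coprimeI)
    fix x assume x1: "x dvd A0" and x2: "x dvd R"
    have "x dvd c * w" using x1 x2 unfolding A0_def by (simp add: dvd_add_left_iff)
    moreover have "coprime x c" using coprime_divisors[OF x2 dvd_refl Rc] .
    ultimately have "x dvd w" by (simp add: coprime_dvd_mult_right_iff)
    then have xR1: "x dvd R + 1" using w by simp
    have "x dvd 1" by (rule iffD1[OF dvd_add_right_iff[OF x2] xR1])
    then show "is_unit x" by (rule unit_nat)
  qed
  have cA0P: "coprime A0 P"
  proof -
    have "coprime A0 (c ^ k)" using cA0c by simp
    then show ?thesis using coprime_divisors[OF dvd_refl Pk(2)] by simp
  qed
  have cA0r: "coprime A0 r" using cA0R cA0P Pk(1) by simp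
  define a where "a = A0 mod r"
  have r0: "r \<noteq> 0" using r by simp
  have ca: "coprime a r" unfolding a_def using cA0r r0 by simp
  have ar: "a < r" unfolding a_def using r by simp
  define E0 where "E0 = c + r - a"
  have aE: "a + E0 = c + r" unfolding E0_def using ar by simp
  define q where "q = A0 div r"
  have q: "A0 = r * q + a" unfolding q_def a_def by simp
  have cE0c: "coprime E0 c"
  proof (rule coprimeI)
    fix x assume x1: "x dvd E0" and x2: "x dvd c"
    have xr: "x dvd r" using x2 cr by (rule dvd_trans)
    have "x dvd a + E0" using x2 xr aE by simp
    then have "x dvd a" using x1 by (simp add: dvd_add_left_iff)
    then have "x dvd A0" using q xr by simp
    then show "is_unit x" using coprime_common_divisor[OF cA0c _ x2] by simp
  qed
  have cE0R: "coprime E0 R"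
  proof (rule coprimeI)
    fix x assume x1: "x dvd E0" and x2: "x dvd R"
    have xr: "x dvd r" using x2 Rr by (rule dvd_trans)
    have eqi: "int c * int w + int E0 + int R = int c + int r * (1 + int q)"
    proof -
      have "int A0 = int r * int q + int a" using q by simp
      moreover have "int a + int E0 = int c + int r" using arg_cong[OF aE, of int] by simp
      moreover have "int A0 = int c * int w + int R" unfolding A0_def by simp
      ultimately show ?thesis by (simp add: algebra_simps)
    qed
    have "int x dvd int c * (int w - 1)"
    proof -
      have "int c * (int w - 1) = int r * (1 + int q) - int E0 - int R" using eqi by (simp add: algebra_simps)
      moreover have "int x dvd int r * (1 + int q)" using xr by simp
      moreover have "int x dvd int E0" using x1 by simp
      moreover have "int x dvd int R" using x2 by simp
      ultimately show ?thesis by simp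
    qed
    moreover have "coprime (int x) (int c)" using coprime_divisors[OF x2 dvd_refl Rc] by simp
    ultimately have "int x dvd int w - 1" by (simp add: coprime_dvd_mult_right_iff)
    then have "int x dvd 2 * (int w - 1)" by (rule dvd_mult)
    moreover have "2 * (int w - 1) = int R - 1" proof -
      have "int R + 1 = 2 * int w" using arg_cong[OF w, of int] by simp
      then show ?thesis by (simp add: algebra_simps)
    qed
    ultimately have "int x dvd int R - 1" by simp
    moreover have "int x dvd int R" using x2 by simp
    ultimately have "int x dvd int R - (int R - 1)" by (rule dvd_diff[rotated])
    then have "int x dvd 1" by simp
    then have "x dvd 1" by simp
    then show "is_unit x" by simp
  qed
  have cE0P: "coprime E0 P"
  proof -
    have "coprime E0 (c ^ k)" using cE0c by simp
    then show ?thesis using coprime_divisors[OF dvd_refl Pk(2)] by simp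
  qed
  have cE0r: "coprime E0 r" using cE0R cE0P Pk(1) by simp
  define e where "e = E0 mod r"
  have ce: "coprime e r" unfolding e_def using cE0r r0 by simp
  have ae: "(a + e) mod r = c mod r"
  proof -
    have "(a + e) mod r = (a + E0) mod r" unfolding e_def by (rule mod_add_right_eq)
    also have "\<dots> = (c + r) mod r" using aE by simp
    also have "\<dots> = c mod r" by simp
    finally show ?thesis .
  qed
  have e0: "e \<noteq> 0"
  proof
    assume "e = 0"
    then have "coprime 0 r" using ce by simp
    then show False using r by simp
  qed
  obtain x y where xy: "e * x = r * y + gcd e r" using bezout_nat[OF e0] by blast
  have "gcd e r = 1" using ce by simp
  then have "e * x = r * y + 1" using xy by simp
  then have "(e * x) mod r = 1" by (rule mod_helper) (use r in simp)
  then show ?thesis using ca ce ae by blast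
qed



lemma assemble:
  fixes B :: "'b set"
  assumes B: "finite B" and cB: "card B = s" and n: "n = r * s" and cf: "r = c * f" and md: "m = f * d"
    and c0: "0 < c" and f0: "0 < f" and d0: "0 < d" and r1: "1 < r"
    and ca: "coprime a r" and ce: "coprime e r" and ae: "(a + e) mod r = c mod r" and ee: "(e*e') mod r = 1"
    and Ap: "\<And>j. As j permutes B" and Ar: "\<And>j. j < c \<Longrightarrow> reg d (As j) B"
    and AP: "\<And>b. b \<in> B \<Longrightarrow> prodA As c b = b"
  shows "cycle_class n m \<subseteq> set_square (cycle_class n r)"
proof -
  let ?\<psi> = "psiF r e' c As"
  let ?A = "{0..<r} \<times> B"
  have r0: "0 < r" using r1 by simp
  have X: "reg r (skew r a (\<lambda>_. id) B) ?A" by (rule skew_unit_reg[OF B r0 ca])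
  have cr: "c \<le> r" using cf f0 by simp
  have Y: "reg r (skew r e ?\<psi> B) ?A" by (rule master_Y[OF B r0 ce ee cr Ap AP])
  have comp: "skew r a (\<lambda>_. id) B \<circ> skew r e ?\<psi> B = skew r c ?\<psi> B"
    by (rule skew_comp[OF psiF_perm[OF Ap] ae])
  have S: "reg (f*d) (skew r c ?\<psi> B) ?A" by (rule master_S[OF B cf c0 f0 ee Ap d0 Ar])
  show ?thesis
  proof (rule from_model[of ?A n r _ _ m])
    show "finite ?A" using B by simp
    show "card ?A = n" using cB n by (simp add: card_cartesian_product)
    show "reg r (skew r a (\<lambda>_. id) B) ?A" by (rule X)
    show "reg r (skew r e ?\<psi> B) ?A" by (rule Y)
    show "reg m (skew r a (\<lambda>_. id) B \<circ> skew r e ?\<psi> B) ?A" using S comp md by simp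
    show "0 < m" using md f0 d0 by simp
  qed
qed

lemma assemble1:
  fixes B :: "'b set"
  assumes B: "finite B" and cB: "card B = s" and n: "n = r * s" and md: "m = r * d"
    and d0: "0 < d" and r3: "3 \<le> r" and oddr: "odd r"
    and Ap: "\<And>j. As j permutes B" and AP: "\<And>b. b \<in> B \<Longrightarrow> prodA As 3 b = b"
    and H: "reg d (As 1 \<circ> As 2 \<circ> As 0) B"
  shows "cycle_class n m \<subseteq> set_square (cycle_class n r)"
proof -
  let ?\<psi> = "psiF r (r-1) 3 As"
  let ?A = "{0..<r} \<times> B"
  have r0: "0 < r" using r3 by simp
  have ca: "coprime 2 r" using oddr by simp
  have ce: "coprime (r-1) r" by (rule coprime_diff_one_left_nat[OF r0])
  define s' where "s' = r - 2"
  have s': "r = s' + 2" unfolding s'_def using r3 by simp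
  have ee: "((r-1)*(r-1)) mod r = 1"
  proof -
    have "(r-1)*(r-1) = r*s' + 1" using s' by (simp add: algebra_simps)
    then show ?thesis by (rule mod_helper) (use r3 in simp)
  qed
  have ae: "(2 + (r-1)) mod r = 1 mod r"
  proof -
    have "2 + (r-1) = r*1 + 1" using r3 by simp
    then have "(2 + (r-1)) mod r = 1" by (rule mod_helper) (use r3 in simp)
    then show ?thesis using r3 by simp
  qed
  have X: "reg r (skew r 2 (\<lambda>_. id) B) ?A" by (rule skew_unit_reg[OF B r0 ca])
  have Y: "reg r (skew r (r-1) ?\<psi> B) ?A" by (rule master_Y[OF B r0 ce ee r3 Ap AP])
  have comp: "skew r 2 (\<lambda>_. id) B \<circ> skew r (r-1) ?\<psi> B = skew r 1 ?\<psi> B"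
    by (rule skew_comp[OF psiF_perm[OF Ap] ae])
  have S: "reg (r*d) (skew r 1 ?\<psi> B) ?A" by (rule master_S1[OF B r3 Ap d0 H])
  show ?thesis
  proof (rule from_model[of ?A n r _ _ m])
    show "finite ?A" using B by simp
    show "card ?A = n" using cB n by (simp add: card_cartesian_product)
    show "reg r (skew r 2 (\<lambda>_. id) B) ?A" by (rule X)
    show "reg r (skew r (r-1) ?\<psi> B) ?A" by (rule Y)
    show "reg m (skew r 2 (\<lambda>_. id) B \<circ> skew r (r-1) ?\<psi> B) ?A" using S comp md by simp
    show "0 < m" using md r0 d0 by simp
  qed
qed

lemma case_even:
  assumes n: "n = r * (d * q)" and cf: "r = c * f" and md: "m = f * d"
    and c0: "0 < c" and f0: "0 < f" and d0: "0 < d" and r1: "1 < r" and ev: "even c"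
  shows "cycle_class n m \<subseteq> set_square (cycle_class n r)"
proof -
  have cr: "c dvd r" using cf by simp
  obtain a e e' where u: "coprime a r" "coprime e r" "(a + e) mod r = c mod r" "(e*e') mod r = 1"
    using units_exist[OF r1 c0 cr] ev by blast
  let ?B = "{0..<d} \<times> {0..<q::nat}"
  have p: "reg d (skew d 1 (\<lambda>_. id) {0..<q}) ?B" by (rule rot_reg[OF d0])
  obtain As where As: "\<forall>j. As j permutes ?B" "\<forall>j<c. reg d (As j) ?B" "\<forall>b\<in>?B. prodA As c b = b"
    using gadget_ext[OF d0 p, of 0 c "\<lambda>_. id"] ev by (auto simp: permutes_id)
  show ?thesis
  proof (rule assemble[of ?B "d*q" n r c f m d a e e' As])
    show "\<And>b. b \<in> ?B \<Longrightarrow> prodA As c b = b" using As(3) by blast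
    show "\<And>j. j < c \<Longrightarrow> reg d (As j) ?B" using As(2) by blast
    show "\<And>j. As j permutes ?B" using As(1) by blast
  qed (use n cf md c0 f0 d0 r1 u in simp_all)
qed

lemma case_odd3:
  assumes n: "n = r * (d * (2 * q))" and cf: "r = c * f" and md: "m = f * d"
    and c3: "3 \<le> c" and f0: "0 < f" and d0: "0 < d" and oddr: "odd r"
  shows "cycle_class n m \<subseteq> set_square (cycle_class n r)"
proof -
  have cr: "c dvd r" using cf by simp
  have c0: "0 < c" using c3 by simp
  have "c \<le> c * f" using f0 by simp
  then have r1: "1 < r" using cf c3 by linarith
  have oddc: "odd c" using oddr cr by (auto elim: dvdE)
  obtain a e e' where u: "coprime a r" "coprime e r" "(a + e) mod r = c mod r" "(e*e') mod r = 1"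
    using units_exist[OF r1 c0 cr] oddr by blast
  let ?B = "{0..<d} \<times> ({0..<2::nat} \<times> {0..<q::nat})"
  obtain p a0 a1 a2 where g: "reg d p ?B" "reg d a0 ?B" "reg d a1 ?B" "reg d a2 ?B"
      "\<forall>b\<in>?B. a2 (a1 (a0 b)) = b"
    using triple_gadget[OF d0, of q] by blast
  define T where "T j = (if j = 0 then a0 else if j = 1 then a1 else a2)" for j :: nat
  have Tp: "\<And>j. T j permutes ?B" unfolding T_def using g by (simp add: reg_perm)
  have Tr: "\<And>j. j < 3 \<Longrightarrow> reg d (T j) ?B" unfolding T_def using g by simp
  have T3: "prodA T 3 = a2 \<circ> (a1 \<circ> (a0 \<circ> id))" by (simp add: T_def numeral_3_eq_3)
  have TP: "\<And>b. b \<in> ?B \<Longrightarrow> prodA T 3 b = b"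
  proof -
    fix b assume b: "b \<in> ?B"
    have "a2 (a1 (a0 b)) = b" using g(5) b by blast
    then show "prodA T 3 b = b" using T3 by simp
  qed
  have ev: "even (c - 3)" using oddc c3 by simp
  obtain As where As: "\<forall>j. As j permutes ?B" "\<forall>j<c. reg d (As j) ?B" "\<forall>b\<in>?B. prodA As c b = b"
    using gadget_ext[OF d0 g(1) c3 ev Tp Tr TP] by blast
  show ?thesis
  proof (rule assemble[of ?B "d*(2*q)" n r c f m d a e e' As])
    show "\<And>b. b \<in> ?B \<Longrightarrow> prodA As c b = b" using As(3) by blast
    show "\<And>j. j < c \<Longrightarrow> reg d (As j) ?B" using As(2) by blast
    show "\<And>j. As j permutes ?B" using As(1) by blast
  qed (use n cf md c0 f0 d0 r1 u in simp_all)
qed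

lemma case_one:
  assumes n: "n = r * (2 * (d * q))" and md: "m = r * d"
    and r3: "3 \<le> r" and d0: "0 < d" and oddr: "odd r"
  shows "cycle_class n m \<subseteq> set_square (cycle_class n r)"
proof -
  let ?B = "{0..<2::nat} \<times> ({0..<d} \<times> {0..<q::nat})"
  obtain As where As: "\<forall>j. As j permutes ?B" "\<forall>b\<in>?B. prodA As 3 b = b"
      "reg d (As 1 \<circ> As 2 \<circ> As 0) ?B"
    using comm_gadget[OF d0, of q] by blast
  show ?thesis
  proof (rule assemble1[of ?B "2*(d*q)" n r m d As])
    show "\<And>b. b \<in> ?B \<Longrightarrow> prodA As 3 b = b" using As(2) by blast
    show "\<And>j. As j permutes ?B" using As(1) by blast
    show "reg d (As 1 \<circ> As 2 \<circ> As 0) ?B" by (rule As(3))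
  qed (use n md r3 d0 oddr in simp_all)
qed



theorem lemma6p3:
  shows "\<exists>n0::nat. \<forall>n>n0. \<forall>r m::nat. 0 < r \<and> 0 < m \<and> r dvd n \<and> m dvd n \<and> 1 < r \<and>
            even (n div m) \<longrightarrow> cycle_class n m \<subseteq> set_square (cycle_class n r)"
proof (rule exI[of _ 0], intro allI impI)
  fix n r m :: nat
  assume n0: "0 < n" and h: "0 < r \<and> 0 < m \<and> r dvd n \<and> m dvd n \<and> 1 < r \<and> even (n div m)"
  then have r0: "0 < r" and m0: "0 < m" and rn: "r dvd n" and mn: "m dvd n" and r1: "1 < r"
    and ev: "even (n div m)" by auto
  obtain s where ns: "n = r * s" using rn by (rule dvdE)
  obtain u where u: "n div m = 2 * u" using ev by (rule evenE)
  have nm: "n = m * (2 * u)" using mn u by (metis dvd_mult_div_cancel)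
  define g where "g = gcd r m"
  have g0: "0 < g" unfolding g_def using r0 by simp
  obtain c0 where rc: "r = g * c0" unfolding g_def by (rule dvdE[OF gcd_dvd1])
  obtain d0 where md: "m = g * d0" unfolding g_def by (rule dvdE[OF gcd_dvd2])
  have cop: "coprime c0 d0"
  proof -
    have "coprime (r div g) (m div g)" unfolding g_def using r0 by (simp add: div_gcd_coprime)
    moreover have "r div g = c0" using rc g0 by simp
    moreover have "m div g = d0" using md g0 by simp
    ultimately show ?thesis by simp
  qed
  have c00: "0 < c0" using rc r0 by (cases c0) auto
  have d00: "0 < d0" using md m0 by (cases d0) auto
  have key: "c0 * s = d0 * (2 * u)"
  proof -
    have "g * (c0 * s) = r * s" using rc by (simp add: ac_simps)
    also have "\<dots> = n" using ns by simp
    also have "\<dots> = m * (2 * u)" by (rule nm)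
    also have "\<dots> = g * (d0 * (2 * u))" using md by (simp add: ac_simps)
    finally have eq: "g * (c0 * s) = g * (d0 * (2 * u))" .
    have gn: "g \<noteq> 0" using g0 by simp
    show ?thesis by (rule iffD1[OF mult_left_cancel[OF gn] eq])
  qed
  show "cycle_class n m \<subseteq> set_square (cycle_class n r)"
  proof (cases "even c0")
    case True
    have "d0 dvd c0 * s" using key by simp
    then have "d0 dvd s" using cop by (simp add: coprime_dvd_mult_right_iff coprime_commute)
    then obtain q where q: "s = d0 * q" by (rule dvdE)
    show ?thesis
      by (rule case_even[of n r d0 q c0 g m]) (use ns q rc md c00 g0 d00 r1 True in \<open>simp_all add: ac_simps\<close>)
  next
    case False
    have cop2: "coprime (2 * d0) c0" using False cop by (simp add: coprime_commute)
    have "2 * d0 dvd c0 * s" using key by (simp add: ac_simps)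
    then have "2 * d0 dvd s" using cop2 by (simp add: coprime_dvd_mult_right_iff)
    then obtain q where q: "s = 2 * d0 * q" by (rule dvdE)
    show ?thesis
    proof (cases "even r")
      case True
      have "even g" using True False rc by simp
      then obtain f where f: "g = 2 * f" by (rule evenE)
      have f0: "0 < f" using f g0 by simp
      show ?thesis
        by (rule case_even[of n r "2*d0" q "2*c0" f m]) (use ns q rc md c00 f0 d00 r1 f in \<open>simp_all add: ac_simps\<close>)
    next
      case oddr: False
      show ?thesis
      proof (cases "c0 = 1")
        case True
        have r3: "3 \<le> r" using r1 oddr by presburger
        show ?thesis
          by (rule case_one[of n r d0 q m]) (use ns q rc md True r3 d00 oddr in \<open>simp_all add: ac_simps\<close>)
      next
        case c1: False
        have c3: "3 \<le> c0" using c1 False c00 by presburger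
        show ?thesis
          by (rule case_odd3[of n r d0 q c0 g m]) (use ns q rc md c3 g0 d00 oddr in \<open>simp_all add: ac_simps\<close>)
      qed
    qed
  qed
qed


end
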